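(* Let $X$ be finite, $\mathcal{X}_{lim}\subseteq\mathcal{X}^2$, and let $p$ be an observed random joint choice rule on $\mathcal{X}_{lim}$. The following are equivalent: (1) $p$ has a consumption dependent random utility representation on $\mathcal{X}_{lim}$; (2) there exists a vector $r\ge0$ with $rE=p$; (3) there exists a function $q$, indexed by all $(x,y,A,B)$ with $A,B\in\mathcal{X}$, $(x,y)\in A\times B$, satisfying: (a) $\sum_{A\subseteq A'\subseteq X}\sum_{B\subseteq B'\subseteq X}q(x,y,A',B')=p(x,y,A,B)$ for all $A\times B\in\mathcal{X}_{lim}$ and $(x,y)\in A\times B$; (b) $\sum_{y\in B}q(x,y,A,B)=\sum_{z\in X\setminus B}q(x,z,A,B\cup\{z\})$ for all $A\in\mathcal{X}$, all nonempty $B\subsetneq X$, and all $x\in A$; (c) $q(x,y,A,B)\ge0$ for all $A,B\in\mathcal{X}$, $(x,y)\in A\times B$; (d) $\sum_{x\in A}\sum_{y\in X}q(x,y,A,X)=\sum_{z\in X\setminus A}\sum_{y\in X}q(z,y,A\cup\{z\},X)$ for all $A\in\mathcal{X}$ with $A\ne X$; (e) $\sum_{x\in X}\sum_{y\in X}q(x,y,X,X)=1$.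
   Context: $X$ is finite, $\mathcal{X}$ the nonempty subsets of $X$, $\mathcal{L}(X)$ the linear orders on $X$, $M(\succ,A)$ the $\succ$-maximal element of $A$, $N(x,A)=\{\succ: x\succ y\ \forall y\in A\setminus\{x\}\}$. An observed random joint choice rule on $\mathcal{X}_{lim}$ assigns to each $A\times B\in\mathcal{X}_{lim}$ and $(x,y)\in A\times B$ a number $p(x,y,A,B)\ge0$ with $\sum_{x\in A}\sum_{y\in B}p(x,y,A,B)=1$; view $p$ as a vector indexed by such $(x,y,A,B)$. It has a consumption dependent random utility representation if there exist $\nu\in\Delta(\mathcal{L}(X))$ and a transition function $t:X\times\mathcal{L}(X)\to\Delta(\mathcal{L}(X))$ (with $t_{\succ'}(x,\succ)$ the probability of $\succ'$) such that $p(x,y,A,B)=\sum_{\succ\in N(x,A)}\sum_{\succ'\in N(y,B)}\nu(\succ)t_{\succ'}(x,\succ)$ for all $A\times B\in\mathcal{X}_{lim}$, $(x,y)\in A\times B$. The matrix $E$ has rows indexed by tuples $(\succ,(\succ_z)_{z\in X})\in\mathcal{L}(X)^{|X|+1}$ and columns indexed by $(x,y,A,B)$ with $A\times B\in\mathcal{X}_{lim}$, $(x,y)\in A\times B$; its entry is $1$ if $x=M(\succ,A)$ and $y=M(\succ_x,B)$, and $0$ otherwise. *)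

theory Defs
  imports "HOL-Probability.Probability"
begin

text \<open>The finite set X is the universe of a finite type 'a.
  Linear orders on X are strict linear orders (relations) on UNIV.\<close>

definition lin_orders :: "('a \<times> 'a) set set" where
  "lin_orders = {r. strict_linear_order r}"

definition Mx :: "('a \<times> 'a) set \<Rightarrow> 'a set \<Rightarrow> 'a" where
  "Mx r A = (THE x. x \<in> A \<and> (\<forall>y\<in>A - {x}. (x, y) \<in> r))"

definition Nx :: "'a \<Rightarrow> 'a set \<Rightarrow> ('a \<times> 'a) set set" where
  "Nx x A = {r \<in> lin_orders. \<forall>y\<in>A - {x}. (x, y) \<in> r}"

definition observed_rjcr ::
  "('a set \<times> 'a set) set \<Rightarrow> ('a \<Rightarrow> 'a \<Rightarrow> 'a set \<Rightarrow> 'a set \<Rightarrow> real) \<Rightarrow> bool" where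
  "observed_rjcr Xlim p \<longleftrightarrow>
     (\<forall>(A, B)\<in>Xlim. (\<forall>x\<in>A. \<forall>y\<in>B. p x y A B \<ge> 0) \<and>
        (\<Sum>x\<in>A. \<Sum>y\<in>B. p x y A B) = 1)"

definition cdru_rep ::
  "('a set \<times> 'a set) set \<Rightarrow> ('a \<Rightarrow> 'a \<Rightarrow> 'a set \<Rightarrow> 'a set \<Rightarrow> real) \<Rightarrow> bool" where
  "cdru_rep Xlim p \<longleftrightarrow>
     (\<exists>(\<nu> :: ('a \<times> 'a) set pmf) (t :: 'a \<Rightarrow> ('a \<times> 'a) set \<Rightarrow> ('a \<times> 'a) set pmf).
        set_pmf \<nu> \<subseteq> lin_orders \<and>
        (\<forall>x. \<forall>r\<in>lin_orders. set_pmf (t x r) \<subseteq> lin_orders) \<and>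
        (\<forall>(A, B)\<in>Xlim. \<forall>x\<in>A. \<forall>y\<in>B.
           p x y A B = (\<Sum>r\<in>Nx x A. \<Sum>r'\<in>Nx y B. pmf \<nu> r * pmf (t x r) r')))"

definition E_rows :: "(('a \<times> 'a) set \<times> ('a \<Rightarrow> ('a \<times> 'a) set)) set" where
  "E_rows = {(r, f). r \<in> lin_orders \<and> (\<forall>z. f z \<in> lin_orders)}"

definition E_cols :: "('a set \<times> 'a set) set \<Rightarrow> ('a \<times> 'a \<times> 'a set \<times> 'a set) set" where
  "E_cols Xlim = {(x, y, A, B). (A, B) \<in> Xlim \<and> x \<in> A \<and> y \<in> B}"

definition E_mat :: "(('a \<times> 'a) set \<times> ('a \<Rightarrow> ('a \<times> 'a) set)) \<Rightarrow>
    ('a \<times> 'a \<times> 'a set \<times> 'a set) \<Rightarrow> real" where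
  "E_mat rw cl = (case rw of (r, f) \<Rightarrow> case cl of (x, y, A, B) \<Rightarrow>
      if x = Mx r A \<and> y = Mx (f x) B then 1 else 0)"

end

theory Submission
  imports Defs "HOL-Combinatorics.Multiset_Permutations"
begin


definition lower :: "('a \<times> 'a) set \<Rightarrow> 'a \<Rightarrow> 'a set" where
  "lower r x = insert x {z. (x, z) \<in> r}"

lemma lin_def: "r \<in> lin_orders \<longleftrightarrow> trans r \<and> irrefl r \<and> total r"
  by (simp add: lin_orders_def strict_linear_order_on_def)

lemma lin_irr: "r \<in> lin_orders \<Longrightarrow> (a, a) \<notin> r"
  by (simp add: lin_def irrefl_def)

lemma lin_trans: "r \<in> lin_orders \<Longrightarrow> (a, b) \<in> r \<Longrightarrow> (b, c) \<in> r \<Longrightarrow> (a, c) \<in> r"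
proof -
  assume "r \<in> lin_orders" "(a, b) \<in> r" "(b, c) \<in> r"
  moreover have "trans r" using \<open>r \<in> lin_orders\<close> by (simp add: lin_def)
  ultimately show ?thesis by (rule_tac transD) auto
qed

lemma lin_asym: "r \<in> lin_orders \<Longrightarrow> (a, b) \<in> r \<Longrightarrow> (b, a) \<notin> r"
proof
  assume "r \<in> lin_orders" "(a, b) \<in> r" "(b, a) \<in> r"
  then have "(a, a) \<in> r" by (rule lin_trans)
  then show False using lin_irr \<open>r \<in> lin_orders\<close> by metis
qed

lemma lin_total: "r \<in> lin_orders \<Longrightarrow> a \<noteq> b \<Longrightarrow> (a, b) \<in> r \<or> (b, a) \<in> r"
  by (simp add: lin_def total_on_def)

lemma max_ex:
  assumes r: "r \<in> lin_orders" and "finite A" "A \<noteq> {}"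
  shows "\<exists>x\<in>A. \<forall>y\<in>A - {x}. (x, y) \<in> r"
  using assms(2,3)
proof (induction A rule: finite_ne_induct)
  case (singleton x) then show ?case by auto
next
  case (insert a A)
  then obtain m where m: "m \<in> A" "\<forall>y\<in>A - {m}. (m, y) \<in> r" by blast
  have "a \<noteq> m" using insert m by blast
  then consider "(m, a) \<in> r" | "(a, m) \<in> r" using lin_total[OF r] by blast
  then show ?case
  proof cases
    case 1
    have "\<forall>y\<in>insert a A - {m}. (m, y) \<in> r" using m 1 by blast
    then show ?thesis using m by blast
  next
    case 2
    have "\<forall>y\<in>insert a A - {a}. (a, y) \<in> r"
    proof
      fix y assume y: "y \<in> insert a A - {a}"
      show "(a, y) \<in> r"
      proof (cases "y = m")
        case False
        then have "(m, y) \<in> r" using m y by blast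
        then show ?thesis using 2 lin_trans[OF r] by blast
      qed (use 2 in simp)
    qed
    then show ?thesis by blast
  qed
qed

lemma min_ex:
  assumes r: "r \<in> lin_orders" and "finite A" "A \<noteq> {}"
  shows "\<exists>x\<in>A. \<forall>y\<in>A - {x}. (y, x) \<in> r"
  using assms(2,3)
proof (induction A rule: finite_ne_induct)
  case (singleton x) then show ?case by auto
next
  case (insert a A)
  then obtain m where m: "m \<in> A" "\<forall>y\<in>A - {m}. (y, m) \<in> r" by blast
  have "a \<noteq> m" using insert m by blast
  then consider "(m, a) \<in> r" | "(a, m) \<in> r" using lin_total[OF r] by blast
  then show ?case
  proof cases
    case 2
    have "\<forall>y\<in>insert a A - {m}. (y, m) \<in> r" using m 2 by blast
    then show ?thesis using m by blast
  next
    case 1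
    have "\<forall>y\<in>insert a A - {a}. (y, a) \<in> r"
    proof
      fix y assume y: "y \<in> insert a A - {a}"
      show "(y, a) \<in> r"
      proof (cases "y = m")
        case False
        then have "(y, m) \<in> r" using m y by blast
        then show ?thesis using 1 lin_trans[OF r] by blast
      qed (use 1 in simp)
    qed
    then show ?thesis by blast
  qed
qed

lemma Mx_eq:
  assumes r: "r \<in> lin_orders" and x: "x \<in> A" and h: "\<forall>y\<in>A - {x}. (x, y) \<in> r"
  shows "Mx r A = x"
  unfolding Mx_def
proof (rule the_equality)
  show "x \<in> A \<and> (\<forall>y\<in>A - {x}. (x, y) \<in> r)" using x h by blast
next
  fix x' assume "x' \<in> A \<and> (\<forall>y\<in>A - {x'}. (x', y) \<in> r)"
  then show "x' = x" using x h lin_asym[OF r] by blast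
qed

lemma Nx_iff:
  assumes r: "r \<in> lin_orders" and x: "x \<in> A"
  shows "r \<in> Nx x A \<longleftrightarrow> A \<subseteq> lower r x"
  using r x unfolding Nx_def lower_def by auto

lemma Mx_iff:
  fixes A :: "'a::finite set"
  assumes r: "r \<in> lin_orders" and x: "x \<in> A"
  shows "Mx r A = x \<longleftrightarrow> A \<subseteq> lower r x"
proof
  assume "A \<subseteq> lower r x"
  then show "Mx r A = x" using Mx_eq[OF r x] unfolding lower_def by auto
next
  assume e: "Mx r A = x"
  obtain m where m: "m \<in> A" "\<forall>y\<in>A - {m}. (m, y) \<in> r" using max_ex[OF r, of A] x by auto
  then have "Mx r A = m" using Mx_eq[OF r] by blast
  then show "A \<subseteq> lower r x" using e m unfolding lower_def by auto
qed

lemma Mx_in: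
  fixes A :: "'a::finite set"
  assumes r: "r \<in> lin_orders" and "A \<noteq> {}"
  shows "Mx r A \<in> A"
proof -
  obtain m where m: "m \<in> A" "\<forall>y\<in>A - {m}. (m, y) \<in> r" using max_ex[OF r, of A] assms by auto
  then show ?thesis using Mx_eq[OF r] by metis
qed

lemma mem_lower: "b \<in> lower r a \<longleftrightarrow> b = a \<or> (a, b) \<in> r"
  by (auto simp: lower_def)

lemma lower_inj:
  assumes r: "r \<in> lin_orders" and e: "lower r y = lower r y'"
  shows "y = y'"
proof (rule ccontr)
  assume ne: "y \<noteq> y'"
  have "y \<in> lower r y'" "y' \<in> lower r y" using e by (auto simp: mem_lower)
  then have "(y', y) \<in> r" "(y, y') \<in> r" using ne by (auto simp: mem_lower)
  then show False using lin_asym[OF r] by blast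
qed

lemma lower_uniq2:
  assumes r: "r \<in> lin_orders" and e: "lower r z = insert z B" "lower r z' = insert z' B"
    and n: "z \<notin> B" "z' \<notin> B"
  shows "z = z'"
proof (rule ccontr)
  assume ne: "z \<noteq> z'"
  then consider "(z, z') \<in> r" | "(z', z) \<in> r" using lin_total[OF r] by blast
  then show False
  proof cases
    case 1
    then have "z' \<in> lower r z" by (simp add: mem_lower)
    then show False using e(1) n(2) ne by simp
  next
    case 2
    then have "z \<in> lower r z'" by (simp add: mem_lower)
    then show False using e(2) n(1) ne by simp
  qed
qed

lemma downset_iff:
  fixes B :: "'a::finite set"
  assumes r: "r \<in> lin_orders" and B: "B \<noteq> {}" "B \<noteq> UNIV"
  shows "(\<exists>y\<in>B. lower r y = B) \<longleftrightarrow> (\<exists>z\<in>UNIV - B. lower r z = insert z B)"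
proof -
  define dc where "dc = (\<forall>a\<in>B. \<forall>b. (a, b) \<in> r \<longrightarrow> b \<in> B)"
  have 1: "(\<exists>y\<in>B. lower r y = B) \<longleftrightarrow> dc"
  proof
    assume "\<exists>y\<in>B. lower r y = B"
    then obtain y where y: "y \<in> B" "lower r y = B" by blast
    have yB: "b \<in> B \<longleftrightarrow> b = y \<or> (y, b) \<in> r" for b
      using y(2) mem_lower[of b r y] by simp
    show dc unfolding dc_def
    proof (intro ballI allI impI)
      fix a b assume "a \<in> B" "(a, b) \<in> r"
      then have "a = y \<or> (y, a) \<in> r" using yB by simp
      then have "(y, b) \<in> r"
      proof
        assume "(y, a) \<in> r" then show ?thesis using \<open>(a, b) \<in> r\<close> by (rule lin_trans[OF r])
      qed (use \<open>(a, b) \<in> r\<close> in simp)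
      then show "b \<in> B" using yB by simp
    qed
  next
    assume dc
    obtain m where m: "m \<in> B" "\<forall>y\<in>B - {m}. (m, y) \<in> r"
      using max_ex[OF r, of B] B(1) finite by blast
    have "lower r m = B"
    proof (intro equalityI subsetI)
      fix b assume "b \<in> lower r m"
      then have "b = m \<or> (m, b) \<in> r" by (simp add: mem_lower)
      then show "b \<in> B" using m(1) \<open>dc\<close> unfolding dc_def by blast
    next
      fix b assume "b \<in> B"
      then have "b = m \<or> (m, b) \<in> r" using m(2) by blast
      then show "b \<in> lower r m" by (simp add: mem_lower)
    qed
    then show "\<exists>y\<in>B. lower r y = B" using m(1) by blast
  qed
  have 2: "(\<exists>z\<in>UNIV - B. lower r z = insert z B) \<longleftrightarrow> dc"
  proof
    assume "\<exists>z\<in>UNIV - B. lower r z = insert z B"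
    then obtain z where z: "z \<notin> B" "lower r z = insert z B" by blast
    have zB: "b \<in> insert z B \<longleftrightarrow> b = z \<or> (z, b) \<in> r" for b
      using z(2) mem_lower[of b r z] by simp
    show dc unfolding dc_def
    proof (intro ballI allI impI)
      fix a b assume ab: "a \<in> B" "(a, b) \<in> r"
      then have "a \<noteq> z" using z(1) by auto
      then have za: "(z, a) \<in> r" using zB[of a] ab(1) by simp
      then have zb: "(z, b) \<in> r" using ab(2) by (rule lin_trans[OF r])
      have "b \<noteq> z"
      proof
        assume "b = z"
        then have "(a, z) \<in> r" using ab(2) by simp
        then show False using za lin_asym[OF r] by simp
      qed
      then show "b \<in> B" using zB[of b] zb by simp
    qed
  next
    assume dc
    obtain m where m: "m \<in> UNIV - B" "\<forall>y\<in>(UNIV - B) - {m}. (y, m) \<in> r"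
      using min_ex[OF r, of "UNIV - B"] B(2) finite by blast
    have "lower r m = insert m B"
    proof (intro equalityI subsetI)
      fix b assume "b \<in> lower r m"
      then have "b = m \<or> (m, b) \<in> r" by (simp add: mem_lower)
      then show "b \<in> insert m B"
      proof
        assume mb: "(m, b) \<in> r"
        show ?thesis
        proof (rule ccontr)
          assume "b \<notin> insert m B"
          then have "(b, m) \<in> r" using m(2) by blast
          then show False using mb lin_asym[OF r] by simp
        qed
      qed simp
    next
      fix b assume b: "b \<in> insert m B"
      show "b \<in> lower r m"
      proof (cases "b = m")
        case False
        then have bB: "b \<in> B" using b by simp
        then have "b \<noteq> m" using m(1) by auto
        then have "(m, b) \<in> r \<or> (b, m) \<in> r" using lin_total[OF r] by simp
        moreover have "(b, m) \<notin> r" using \<open>dc\<close> bB m(1) unfolding dc_def by blast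
        ultimately show ?thesis by (simp add: mem_lower)
      qed (simp add: mem_lower)
    qed
    then show "\<exists>z\<in>UNIV - B. lower r z = insert z B" using m(1) by blast
  qed
  show ?thesis using 1 2 by simp
qed

lemma sum_if_unique:
  fixes c :: real
  assumes "finite S" "\<forall>a\<in>S. \<forall>b\<in>S. P a \<longrightarrow> P b \<longrightarrow> a = b"
  shows "(\<Sum>y\<in>S. if P y then c else 0) = (if \<exists>y\<in>S. P y then c else 0)"
proof (cases "\<exists>y\<in>S. P y")
  case True
  then obtain y0 where y0: "y0 \<in> S" "P y0" by blast
  have "(\<Sum>y\<in>S. if P y then c else 0) = (\<Sum>y\<in>S. if y = y0 then c else 0)"
    using assms(2) y0 by (intro sum.cong) auto
  also have "\<dots> = c" using y0 assms(1) by simp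
  finally show ?thesis using True by simp
qed simp

lemma mk_pmf:
  fixes f :: "'b \<Rightarrow> real"
  assumes "finite S" "\<forall>x\<in>S. f x \<ge> 0" "(\<Sum>x\<in>S. f x) = 1"
  shows "\<exists>\<pi>. set_pmf \<pi> \<subseteq> S \<and> (\<forall>x\<in>S. pmf \<pi> x = f x)"
proof -
  define h where "h x = (if x \<in> S then f x else 0)" for x
  have h0: "\<And>x. 0 \<le> h x" using assms(2) by (simp add: h_def)
  have "(\<integral>\<^sup>+x. ennreal (h x) \<partial>count_space UNIV) = (\<Sum>x\<in>S. ennreal (h x))"
    by (rule nn_integral_count_space') (auto simp: h_def assms(1))
  also have "\<dots> = ennreal (\<Sum>x\<in>S. h x)" using h0 by (simp add: sum_ennreal)
  also have "(\<Sum>x\<in>S. h x) = 1" using assms(3) by (simp add: h_def)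
  finally have int1: "(\<integral>\<^sup>+x. ennreal (h x) \<partial>count_space UNIV) = 1" by simp
  have p: "pmf (embed_pmf h) x = h x" for x using pmf_embed_pmf[OF h0 int1] .
  have s: "set_pmf (embed_pmf h) = {x. h x \<noteq> 0}" using set_embed_pmf[OF h0 int1] .
  show ?thesis
    by (intro exI[of _ "embed_pmf h"]) (auto simp: p s h_def)
qed


primrec ord_of :: "'a list \<Rightarrow> ('a \<times> 'a) set" where
  "ord_of [] = {}"
| "ord_of (x # xs) = (\<lambda>b. (x, b)) ` set xs \<union> ord_of xs"

lemma ord_of_mem: "(a, b) \<in> ord_of xs \<Longrightarrow> a \<in> set xs \<and> b \<in> set xs"
  by (induction xs) auto

lemma ord_of_irr: "distinct xs \<Longrightarrow> (a, a) \<notin> ord_of xs"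
  by (induction xs) auto

lemma ord_of_trans:
  "distinct xs \<Longrightarrow> (a, b) \<in> ord_of xs \<Longrightarrow> (b, c) \<in> ord_of xs \<Longrightarrow> (a, c) \<in> ord_of xs"
proof (induction xs)
  case Nil then show ?case by simp
next
  case (Cons x xs)
  have xn: "x \<notin> set xs" "distinct xs" using Cons.prems(1) by auto
  have bx: "b \<noteq> x"
  proof
    assume "b = x"
    then have "(a, x) \<in> ord_of (x # xs)" using Cons.prems(2) by simp
    then show False using xn ord_of_mem[of a x xs] by auto
  qed
  then have bc: "(b, c) \<in> ord_of xs" using Cons.prems(3) by auto
  show ?case
  proof (cases "a = x")
    case True
    then show ?thesis using ord_of_mem[OF bc] by auto
  next
    case False
    then have "(a, b) \<in> ord_of xs" using Cons.prems(2) by auto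
    then show ?thesis using Cons.IH[OF xn(2) _ bc] by simp
  qed
qed

lemma ord_of_total:
  "a \<in> set xs \<Longrightarrow> b \<in> set xs \<Longrightarrow> a \<noteq> b \<Longrightarrow> (a, b) \<in> ord_of xs \<or> (b, a) \<in> ord_of xs"
  by (induction xs) auto

lemma ord_of_lin:
  assumes "set xs = UNIV" "distinct xs"
  shows "ord_of xs \<in> lin_orders"
  unfolding lin_def
proof (intro conjI)
  show "trans (ord_of xs)" by (rule transI) (rule ord_of_trans[OF assms(2)])
  show "irrefl (ord_of xs)" using ord_of_irr[OF assms(2)] by (auto simp: irrefl_def)
  show "total (ord_of xs)"
  proof (rule total_onI)
    fix a b :: 'a assume "a \<noteq> b"
    moreover have "a \<in> set xs" "b \<in> set xs" using assms(1) by auto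
    ultimately show "(a, b) \<in> ord_of xs \<or> (b, a) \<in> ord_of xs" by (rule ord_of_total[rotated 2])
  qed
qed

lemma lower_ord_of:
  "distinct (us @ y # vs) \<Longrightarrow> lower (ord_of (us @ y # vs)) y = insert y (set vs)"
proof (induction us)
  case Nil
  then have "y \<notin> set vs" by simp
  then have "(y, b) \<notin> ord_of vs" for b using ord_of_mem[of y b vs] by auto
  then show ?case by (auto simp: lower_def)
next
  case (Cons u us)
  then have "u \<noteq> y" by auto
  then have "{z. (y, z) \<in> ord_of (u # us @ y # vs)} = {z. (y, z) \<in> ord_of (us @ y # vs)}" by auto
  then show ?case using Cons by (simp add: lower_def)
qed

lemma lin_ne: "\<exists>r::('a::finite \<times> 'a) set. r \<in> lin_orders"
proof -
  obtain xs :: "'a list" where "set xs = UNIV" "distinct xs"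
    using finite_distinct_list[of "UNIV :: 'a set"] by auto
  then show ?thesis using ord_of_lin by blast
qed


definition Fs :: "('a \<Rightarrow> ('a \<times> 'a) set) set" where
  "Fs = {f. \<forall>z. f z \<in> lin_orders}"

lemma Fs_PiE: "Fs = Pi\<^sub>E UNIV (\<lambda>_. lin_orders)"
  by (auto simp: Fs_def PiE_UNIV_domain Pi_def)

lemma E_rows_Sigma: "E_rows = Sigma lin_orders (\<lambda>_. Fs)"
  by (auto simp: E_rows_def Fs_def)

lemma sum_E_rows:
  fixes g :: "(('a::finite \<times> 'a) set \<times> ('a \<Rightarrow> ('a \<times> 'a) set)) \<Rightarrow> real"
  shows "(\<Sum>rw\<in>E_rows. g rw) = (\<Sum>r\<in>lin_orders. \<Sum>f\<in>Fs. g (r, f))"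
  unfolding E_rows_Sigma by (subst sum.Sigma) auto

lemma E_mat_eq:
  fixes A B :: "'a::finite set"
  assumes r: "r \<in> lin_orders" and f: "f x \<in> lin_orders" and x: "x \<in> A" and y: "y \<in> B"
  shows "E_mat (r, f) (x, y, A, B) = (if r \<in> Nx x A \<and> f x \<in> Nx y B then 1 else 0)"
proof -
  have 1: "(x = Mx r A) = (r \<in> Nx x A)" using Mx_iff[OF r x] Nx_iff[OF r x] by auto
  have 2: "(y = Mx (f x) B) = (f x \<in> Nx y B)" using Mx_iff[OF f y] Nx_iff[OF f y] by auto
  show ?thesis unfolding E_mat_def using 1 2 by simp
qed

lemma sum_pmf_lin:
  fixes M :: "('a::finite \<times> 'a) set pmf"
  assumes "set_pmf M \<subseteq> lin_orders"
  shows "(\<Sum>s\<in>lin_orders. pmf M s) = 1"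
  by (rule sum_pmf_eq_1) (auto simp: assms)

lemma Nx_sub: "Nx x A \<subseteq> lin_orders"
  by (auto simp: Nx_def)

lemma one_to_two:
  fixes Xlim :: "('a::finite set \<times> 'a set) set"
  assumes "cdru_rep Xlim p"
  shows "\<exists>r. (\<forall>rw\<in>E_rows. r rw \<ge> 0) \<and>
            (\<forall>cl\<in>E_cols Xlim. (\<Sum>rw\<in>E_rows. r rw * E_mat rw cl) = (case cl of (x, y, A, B) \<Rightarrow> p x y A B))"
proof -
  obtain \<nu> t where nu: "set_pmf \<nu> \<subseteq> lin_orders"
    and t: "\<forall>x. \<forall>r\<in>lin_orders. set_pmf (t x r) \<subseteq> lin_orders"
    and rep: "\<forall>(A, B)\<in>Xlim. \<forall>x\<in>A. \<forall>y\<in>B.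
           p x y A B = (\<Sum>r\<in>Nx x A. \<Sum>r'\<in>Nx y B. pmf \<nu> r * pmf (t x r) r')"
    using assms unfolding cdru_rep_def by blast
  define R where "R rw = (case rw of (r, f) \<Rightarrow> pmf \<nu> r * (\<Prod>z\<in>UNIV. pmf (t z r) (f z)))" for rw
  have R0: "\<forall>rw\<in>E_rows. R rw \<ge> 0"
    by (auto simp: R_def intro!: prod_nonneg mult_nonneg_nonneg)
  have main: "(\<Sum>rw\<in>E_rows. R rw * E_mat rw (x, y, A, B)) = p x y A B"
    if AB: "(A, B) \<in> Xlim" and x: "x \<in> A" and y: "y \<in> B" for x y A B
  proof -
    have inner: "(\<Sum>f\<in>Fs. (\<Prod>z\<in>UNIV. pmf (t z r) (f z)) * (if f x \<in> Nx y B then 1 else 0))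
        = (\<Sum>s\<in>Nx y B. pmf (t x r) s)" if r: "r \<in> lin_orders" for r
    proof -
      define h where "h z s = pmf (t z r) s * (if z = x then (if s \<in> Nx y B then 1 else 0) else 1)" for z s
      have "(\<Sum>f\<in>Fs. (\<Prod>z\<in>UNIV. pmf (t z r) (f z)) * (if f x \<in> Nx y B then 1 else 0))
          = (\<Sum>f\<in>Fs. \<Prod>z\<in>UNIV. h z (f z))"
      proof (rule sum.cong[OF refl])
        fix f :: "'a \<Rightarrow> ('a \<times> 'a) set"
        have "(\<Prod>z\<in>UNIV. h z (f z)) = (\<Prod>z\<in>UNIV. pmf (t z r) (f z)) *
              (\<Prod>z\<in>UNIV. (if z = x then (if f z \<in> Nx y B then 1 else 0) else 1))"
          unfolding h_def by (rule prod.distrib)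
        also have "(\<Prod>z\<in>UNIV. (if z = x then (if f z \<in> Nx y B then 1 else 0) else (1::real)))
            = (if f x \<in> Nx y B then 1 else 0)"
          by (subst prod.delta) auto
        finally show "(\<Prod>z\<in>UNIV. pmf (t z r) (f z)) * (if f x \<in> Nx y B then 1 else 0) = (\<Prod>z\<in>UNIV. h z (f z))"
          by simp
      qed
      also have "\<dots> = (\<Prod>z\<in>UNIV. \<Sum>s\<in>lin_orders. h z s)"
        unfolding Fs_PiE by (rule prod_sum_PiE[symmetric]) auto
      also have "\<dots> = (\<Prod>z\<in>UNIV. if z = x then (\<Sum>s\<in>Nx y B. pmf (t x r) s) else 1)"
      proof (rule prod.cong[OF refl])
        fix z
        show "(\<Sum>s\<in>lin_orders. h z s) = (if z = x then (\<Sum>s\<in>Nx y B. pmf (t x r) s) else 1)"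
        proof (cases "z = x")
          case True
          have "(\<Sum>s\<in>lin_orders. h z s) = (\<Sum>s\<in>lin_orders. if s \<in> Nx y B then pmf (t x r) s else 0)"
            using True by (intro sum.cong) (auto simp: h_def)
          also have "\<dots> = (\<Sum>s\<in>lin_orders \<inter> Nx y B. pmf (t x r) s)"
            by (simp add: sum.inter_restrict)
          also have "lin_orders \<inter> Nx y B = Nx y B" using Nx_sub[of y B] by blast
          finally show ?thesis using True by simp
        next
          case False
          have "(\<Sum>s\<in>lin_orders. h z s) = (\<Sum>s\<in>lin_orders. pmf (t z r) s)"
            using False by (simp add: h_def)
          also have "\<dots> = 1" using t r by (intro sum_pmf_lin) blast
          finally show ?thesis using False by simp
        qed
      qed
      also have "\<dots> = (\<Sum>s\<in>Nx y B. pmf (t x r) s)"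
        by (subst prod.delta) auto
      finally show ?thesis .
    qed
    have "(\<Sum>rw\<in>E_rows. R rw * E_mat rw (x, y, A, B))
        = (\<Sum>r\<in>lin_orders. \<Sum>f\<in>Fs. R (r, f) * E_mat (r, f) (x, y, A, B))"
      by (rule sum_E_rows)
    also have "\<dots> = (\<Sum>r\<in>lin_orders. if r \<in> Nx x A then pmf \<nu> r * (\<Sum>s\<in>Nx y B. pmf (t x r) s) else 0)"
    proof (rule sum.cong[OF refl])
      fix r :: "('a \<times> 'a) set" assume r: "r \<in> lin_orders"
      have "(\<Sum>f\<in>Fs. R (r, f) * E_mat (r, f) (x, y, A, B))
          = (\<Sum>f\<in>Fs. (if r \<in> Nx x A then pmf \<nu> r else 0) *
               ((\<Prod>z\<in>UNIV. pmf (t z r) (f z)) * (if f x \<in> Nx y B then 1 else 0)))"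
      proof (rule sum.cong[OF refl])
        fix f :: "'a \<Rightarrow> ('a \<times> 'a) set" assume "f \<in> Fs"
        then have fx: "f x \<in> lin_orders" by (simp add: Fs_def)
        show "R (r, f) * E_mat (r, f) (x, y, A, B) = (if r \<in> Nx x A then pmf \<nu> r else 0) *
               ((\<Prod>z\<in>UNIV. pmf (t z r) (f z)) * (if f x \<in> Nx y B then 1 else 0))"
          using E_mat_eq[of r f x A y B, OF r fx x y] by (simp add: R_def)
      qed
      also have "\<dots> = (if r \<in> Nx x A then pmf \<nu> r else 0) * (\<Sum>s\<in>Nx y B. pmf (t x r) s)"
        by (simp add: sum_distrib_left[symmetric] inner[OF r])
      finally show "(\<Sum>f\<in>Fs. R (r, f) * E_mat (r, f) (x, y, A, B)) =
          (if r \<in> Nx x A then pmf \<nu> r * (\<Sum>s\<in>Nx y B. pmf (t x r) s) else 0)" by simp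
    qed
    also have "\<dots> = (\<Sum>r\<in>lin_orders \<inter> Nx x A. pmf \<nu> r * (\<Sum>s\<in>Nx y B. pmf (t x r) s))"
      by (simp add: sum.inter_restrict)
    also have "lin_orders \<inter> Nx x A = Nx x A" using Nx_sub[of x A] by blast
    also have "(\<Sum>r\<in>Nx x A. pmf \<nu> r * (\<Sum>s\<in>Nx y B. pmf (t x r) s)) = p x y A B"
    proof -
      have "p x y A B = (\<Sum>r\<in>Nx x A. \<Sum>r'\<in>Nx y B. pmf \<nu> r * pmf (t x r) r')"
        using rep AB x y by blast
      then show ?thesis by (simp add: sum_distrib_left)
    qed
    finally show ?thesis .
  qed
  show ?thesis
    by (rule exI[of _ R]) (auto simp: R0 E_cols_def main)
qed


lemma E_sum1:
  fixes A B :: "'a::finite set"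
  assumes rw: "(r, f) \<in> E_rows" and A: "A \<noteq> {}" and B: "B \<noteq> {}"
  shows "(\<Sum>x\<in>A. \<Sum>y\<in>B. E_mat (r, f) (x, y, A, B)) = 1"
proof -
  have r: "r \<in> lin_orders" and f: "\<And>z. f z \<in> lin_orders" using rw by (auto simp: E_rows_def)
  have "(\<Sum>x\<in>A. \<Sum>y\<in>B. E_mat (r, f) (x, y, A, B))
      = (\<Sum>x\<in>A. if x = Mx r A then (\<Sum>y\<in>B. if y = Mx (f x) B then 1 else 0) else 0)"
    by (intro sum.cong refl) (auto simp: E_mat_def)
  also have "\<dots> = (\<Sum>x\<in>A. if x = Mx r A then 1 else 0)"
    using Mx_in[OF f B] by (intro sum.cong refl) simp
  also have "\<dots> = 1" using Mx_in[OF r A] by simp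
  finally show ?thesis .
qed

lemma two_to_one:
  fixes Xlim :: "('a::finite set \<times> 'a set) set"
  assumes Xlim_sub: "\<forall>(A, B)\<in>Xlim. A \<noteq> {} \<and> B \<noteq> {}"
    and p_rule: "observed_rjcr Xlim p"
    and R0: "\<forall>rw\<in>E_rows. R rw \<ge> 0"
    and Req: "\<forall>cl\<in>E_cols Xlim. (\<Sum>rw\<in>E_rows. R rw * E_mat rw cl) = (case cl of (x, y, A, B) \<Rightarrow> p x y A B)"
  shows "cdru_rep Xlim p"
proof -
  obtain o0 :: "('a \<times> 'a) set" where o0: "o0 \<in> lin_orders" using lin_ne by blast
  have Req': "p x y A B = (\<Sum>rw\<in>E_rows. R rw * E_mat rw (x, y, A, B))"
    if "(A, B) \<in> Xlim" "x \<in> A" "y \<in> B" for x y A B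
    using Req that unfolding E_cols_def by auto
  show ?thesis
  proof (cases "Xlim = {}")
    case True
    show ?thesis unfolding cdru_rep_def
      by (rule exI[of _ "return_pmf o0"], rule exI[of _ "\<lambda>_ _. return_pmf o0"]) (simp add: o0 True)
  next
    case False
    then obtain A0 B0 where AB0: "(A0, B0) \<in> Xlim" by auto
    then have A0: "A0 \<noteq> {}" and B0: "B0 \<noteq> {}" using Xlim_sub by auto
    have "1 = (\<Sum>x\<in>A0. \<Sum>y\<in>B0. p x y A0 B0)" using p_rule AB0 unfolding observed_rjcr_def by auto
    also have "\<dots> = (\<Sum>x\<in>A0. \<Sum>y\<in>B0. \<Sum>rw\<in>E_rows. R rw * E_mat rw (x, y, A0, B0))"
      using Req'[OF AB0] by simp
    also have "\<dots> = (\<Sum>x\<in>A0. \<Sum>rw\<in>E_rows. \<Sum>y\<in>B0. R rw * E_mat rw (x, y, A0, B0))"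
      by (rule sum.cong[OF refl], rule sum.swap)
    also have "\<dots> = (\<Sum>rw\<in>E_rows. \<Sum>x\<in>A0. \<Sum>y\<in>B0. R rw * E_mat rw (x, y, A0, B0))"
      by (rule sum.swap)
    also have "\<dots> = (\<Sum>rw\<in>E_rows. R rw * (\<Sum>x\<in>A0. \<Sum>y\<in>B0. E_mat rw (x, y, A0, B0)))"
      by (simp only: sum_distrib_left)
    also have "\<dots> = (\<Sum>rw\<in>E_rows. R rw)"
    proof (rule sum.cong[OF refl])
      fix rw :: "('a \<times> 'a) set \<times> ('a \<Rightarrow> ('a \<times> 'a) set)" assume "rw \<in> E_rows"
      then show "R rw * (\<Sum>x\<in>A0. \<Sum>y\<in>B0. E_mat rw (x, y, A0, B0)) = R rw"
        using E_sum1[of "fst rw" "snd rw" A0 B0] A0 B0 by simp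
    qed
    finally have tot: "(\<Sum>rw\<in>E_rows. R rw) = 1" by simp
    define nu0 where "nu0 r = (\<Sum>f\<in>Fs. R (r, f))" for r
    have Rn: "R (r, f) \<ge> 0" if "r \<in> lin_orders" "f \<in> Fs" for r f
      using R0 that by (auto simp: E_rows_def Fs_def)
    have nu0_nn: "\<forall>r\<in>lin_orders. nu0 r \<ge> 0" unfolding nu0_def using Rn by (auto intro: sum_nonneg)
    have nu0_sum: "(\<Sum>r\<in>lin_orders. nu0 r) = 1" using tot sum_E_rows[of R] by (simp add: nu0_def)
    obtain \<nu> where nu: "set_pmf \<nu> \<subseteq> lin_orders" "\<forall>r\<in>lin_orders. pmf \<nu> r = nu0 r"
      using mk_pmf[OF _ nu0_nn nu0_sum] by auto
    define tf where "tf x r s = (\<Sum>f\<in>{f \<in> Fs. f x = s}. R (r, f)) / nu0 r" for x r s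
    have grp: "(\<Sum>s\<in>lin_orders. \<Sum>f\<in>{f \<in> Fs. f x = s}. g f) = (\<Sum>f\<in>Fs. g f)" for x :: 'a and g :: "_ \<Rightarrow> real"
      by (rule sum.group) (auto simp: Fs_def)
    have "\<exists>\<pi>. r \<in> lin_orders \<and> nu0 r > 0 \<longrightarrow> set_pmf \<pi> \<subseteq> lin_orders \<and> (\<forall>s\<in>lin_orders. pmf \<pi> s = tf x r s)"
      for x r
    proof (cases "r \<in> lin_orders \<and> nu0 r > 0")
      case True
      have "\<forall>s\<in>lin_orders. tf x r s \<ge> 0" using True Rn unfolding tf_def
        by (auto intro!: divide_nonneg_pos sum_nonneg)
      moreover have "(\<Sum>s\<in>lin_orders. tf x r s) = 1"
        using True unfolding tf_def sum_divide_distrib[symmetric] grp nu0_def[symmetric] by simp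
      ultimately show ?thesis using mk_pmf[of lin_orders "tf x r"] by auto
    qed blast
    then have "\<forall>x. \<forall>r. \<exists>\<pi>. r \<in> lin_orders \<and> nu0 r > 0 \<longrightarrow> set_pmf \<pi> \<subseteq> lin_orders \<and> (\<forall>s\<in>lin_orders. pmf \<pi> s = tf x r s)"
      by blast
    then have "\<exists>T. \<forall>x. \<forall>r. r \<in> lin_orders \<and> nu0 r > 0 \<longrightarrow> set_pmf (T x r) \<subseteq> lin_orders \<and> (\<forall>s\<in>lin_orders. pmf (T x r) s = tf x r s)"
      by (simp only: choice_iff)
    then obtain T where T0: "\<forall>x. \<forall>r. r \<in> lin_orders \<and> nu0 r > 0 \<longrightarrow> set_pmf (T x r) \<subseteq> lin_orders \<and> (\<forall>s\<in>lin_orders. pmf (T x r) s = tf x r s)"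
      by blast
    have T: "set_pmf (T x r) \<subseteq> lin_orders \<and> (\<forall>s\<in>lin_orders. pmf (T x r) s = tf x r s)"
      if "r \<in> lin_orders \<and> nu0 r > 0" for x r
      using T0 that by blast
    define t where "t x r = (if r \<in> lin_orders \<and> nu0 r > 0 then T x r else return_pmf o0)" for x r
    have t_sup: "\<forall>x. \<forall>r\<in>lin_orders. set_pmf (t x r) \<subseteq> lin_orders"
      using T o0 by (auto simp: t_def)
    have rep: "p x y A B = (\<Sum>r\<in>Nx x A. \<Sum>r'\<in>Nx y B. pmf \<nu> r * pmf (t x r) r')"
      if AB: "(A, B) \<in> Xlim" and x: "x \<in> A" and y: "y \<in> B" for x y A B
    proof -
      have inner: "(\<Sum>f\<in>Fs. R (r, f) * (if f x \<in> Nx y B then 1 else 0))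
          = (\<Sum>r'\<in>Nx y B. pmf \<nu> r * pmf (t x r) r')" if r: "r \<in> lin_orders" for r
      proof (cases "nu0 r > 0")
        case False
        then have "nu0 r = 0" using nu0_nn r by force
        then have z: "\<forall>f\<in>Fs. R (r, f) = 0" unfolding nu0_def
          using sum_nonneg_eq_0_iff[of Fs "\<lambda>f. R (r, f)"] Rn r by auto
        show ?thesis using z \<open>nu0 r = 0\<close> nu r by simp
      next
        case True
        have "(\<Sum>f\<in>Fs. R (r, f) * (if f x \<in> Nx y B then 1 else 0))
            = (\<Sum>s\<in>lin_orders. \<Sum>f\<in>{f \<in> Fs. f x = s}. R (r, f) * (if f x \<in> Nx y B then 1 else 0))"
          by (rule grp[symmetric])
        also have "\<dots> = (\<Sum>s\<in>lin_orders. if s \<in> Nx y B then (\<Sum>f\<in>{f \<in> Fs. f x = s}. R (r, f)) else 0)"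
          by (intro sum.cong refl) auto
        also have "\<dots> = (\<Sum>s\<in>lin_orders \<inter> Nx y B. (\<Sum>f\<in>{f \<in> Fs. f x = s}. R (r, f)))"
          by (simp add: sum.inter_restrict)
        also have "lin_orders \<inter> Nx y B = Nx y B" using Nx_sub[of y B] by blast
        also have "(\<Sum>s\<in>Nx y B. (\<Sum>f\<in>{f \<in> Fs. f x = s}. R (r, f))) = (\<Sum>s\<in>Nx y B. pmf \<nu> r * pmf (t x r) s)"
        proof (rule sum.cong[OF refl])
          fix s assume "s \<in> Nx y B"
          then have s: "s \<in> lin_orders" using Nx_sub[of y B] by blast
          have "pmf \<nu> r * pmf (t x r) s = nu0 r * tf x r s"
            using nu r T[where x=x and r=r] True s by (simp add: t_def)
          also have "\<dots> = (\<Sum>f\<in>{f \<in> Fs. f x = s}. R (r, f))" using True by (simp add: tf_def)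
          finally show "(\<Sum>f\<in>{f \<in> Fs. f x = s}. R (r, f)) = pmf \<nu> r * pmf (t x r) s" by simp
        qed
        finally show ?thesis .
      qed
      have "p x y A B = (\<Sum>r\<in>lin_orders. \<Sum>f\<in>Fs. R (r, f) * E_mat (r, f) (x, y, A, B))"
        using Req'[OF AB x y] sum_E_rows by simp
      also have "\<dots> = (\<Sum>r\<in>lin_orders. if r \<in> Nx x A then (\<Sum>r'\<in>Nx y B. pmf \<nu> r * pmf (t x r) r') else 0)"
      proof (rule sum.cong[OF refl])
        fix r :: "('a \<times> 'a) set" assume r: "r \<in> lin_orders"
        have "(\<Sum>f\<in>Fs. R (r, f) * E_mat (r, f) (x, y, A, B))
            = (\<Sum>f\<in>Fs. (if r \<in> Nx x A then 1 else 0) * (R (r, f) * (if f x \<in> Nx y B then 1 else 0)))"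
        proof (rule sum.cong[OF refl])
          fix f :: "'a \<Rightarrow> ('a \<times> 'a) set" assume "f \<in> Fs"
          then have fx: "f x \<in> lin_orders" by (simp add: Fs_def)
          show "R (r, f) * E_mat (r, f) (x, y, A, B) =
              (if r \<in> Nx x A then 1 else 0) * (R (r, f) * (if f x \<in> Nx y B then 1 else 0))"
            using E_mat_eq[of r f x A y B, OF r fx x y] by simp
        qed
        also have "\<dots> = (if r \<in> Nx x A then 1 else 0) * (\<Sum>f\<in>Fs. R (r, f) * (if f x \<in> Nx y B then 1 else 0))"
          by (simp add: sum_distrib_left)
        also have "\<dots> = (if r \<in> Nx x A then (\<Sum>r'\<in>Nx y B. pmf \<nu> r * pmf (t x r) r') else 0)"
          using inner[OF r] by simp
        finally show "(\<Sum>f\<in>Fs. R (r, f) * E_mat (r, f) (x, y, A, B)) =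
            (if r \<in> Nx x A then (\<Sum>r'\<in>Nx y B. pmf \<nu> r * pmf (t x r) r') else 0)" .
      qed
      also have "\<dots> = (\<Sum>r\<in>lin_orders \<inter> Nx x A. \<Sum>r'\<in>Nx y B. pmf \<nu> r * pmf (t x r) r')"
        by (simp add: sum.inter_restrict)
      also have "lin_orders \<inter> Nx x A = Nx x A" using Nx_sub[of x A] by blast
      finally show ?thesis .
    qed
    have rep': "\<forall>(A, B)\<in>Xlim. \<forall>x\<in>A. \<forall>y\<in>B.
           p x y A B = (\<Sum>r\<in>Nx x A. \<Sum>r'\<in>Nx y B. pmf \<nu> r * pmf (t x r) r')"
    proof (intro ballI)
      fix AB assume AB: "AB \<in> Xlim"
      obtain A B where e: "AB = (A, B)" by (cases AB)
      show "case AB of (A, B) \<Rightarrow> \<forall>x\<in>A. \<forall>y\<in>B. p x y A B = (\<Sum>r\<in>Nx x A. \<Sum>r'\<in>Nx y B. pmf \<nu> r * pmf (t x r) r')"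
        unfolding e using rep AB e by simp
    qed
    show ?thesis unfolding cdru_rep_def
      by (rule exI[of _ \<nu>], rule exI[of _ t]) (intro conjI nu(1) t_sup rep')
  qed
qed


lemma sum_lower_unique:
  fixes B :: "'a::finite set" and c :: real
  assumes r: "r \<in> lin_orders"
  shows "(\<Sum>y\<in>B. if lower r y = B then c else 0) = (if \<exists>y\<in>B. lower r y = B then c else 0)"
proof (rule sum_if_unique)
  show "\<forall>a\<in>B. \<forall>b\<in>B. lower r a = B \<longrightarrow> lower r b = B \<longrightarrow> a = b"
    using lower_inj[OF r] by metis
qed simp

lemma sum_lower_unique2:
  fixes B :: "'a::finite set" and c :: real
  assumes r: "r \<in> lin_orders"
  shows "(\<Sum>z\<in>UNIV - B. if lower r z = insert z B then c else 0)
      = (if \<exists>z\<in>UNIV - B. lower r z = insert z B then c else 0)"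
proof (rule sum_if_unique)
  show "\<forall>a\<in>UNIV - B. \<forall>b\<in>UNIV - B. lower r a = insert a B \<longrightarrow> lower r b = insert b B \<longrightarrow> a = b"
  proof (intro ballI impI)
    fix a b assume "a \<in> UNIV - B" "b \<in> UNIV - B" "lower r a = insert a B" "lower r b = insert b B"
    then show "a = b" using lower_uniq2[OF r, of a B b] by simp
  qed
qed simp

lemma top_ex:
  fixes r :: "('a::finite \<times> 'a) set"
  assumes r: "r \<in> lin_orders"
  shows "\<exists>y. lower r y = UNIV"
proof -
  have "Mx r UNIV \<in> UNIV" by simp
  then have "UNIV \<subseteq> lower r (Mx r UNIV)" using Mx_iff[OF r, of "Mx r UNIV" UNIV] by simp
  then show ?thesis by blast
qed

lemma sum_top:
  fixes r :: "('a::finite \<times> 'a) set" and c :: real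
  assumes r: "r \<in> lin_orders"
  shows "(\<Sum>y\<in>UNIV. if lower r y = UNIV then c else 0) = c"
  using sum_lower_unique[OF r, of UNIV c] top_ex[OF r] by simp

lemma sum_swap2:
  fixes F :: "'b \<Rightarrow> 'c \<Rightarrow> 'd \<Rightarrow> real"
  shows "(\<Sum>y\<in>S. \<Sum>r\<in>T. \<Sum>r'\<in>U. F y r r') = (\<Sum>r\<in>T. \<Sum>r'\<in>U. \<Sum>y\<in>S. F y r r')"
proof -
  have "(\<Sum>y\<in>S. \<Sum>r\<in>T. \<Sum>r'\<in>U. F y r r') = (\<Sum>r\<in>T. \<Sum>y\<in>S. \<Sum>r'\<in>U. F y r r')"
    by (rule sum.swap)
  also have "\<dots> = (\<Sum>r\<in>T. \<Sum>r'\<in>U. \<Sum>y\<in>S. F y r r')"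
    by (rule sum.cong[OF refl], rule sum.swap)
  finally show ?thesis .
qed

lemma one_to_three:
  fixes Xlim :: "('a::finite set \<times> 'a set) set"
  assumes "cdru_rep Xlim p"
  shows "\<exists>q :: 'a \<Rightarrow> 'a \<Rightarrow> 'a set \<Rightarrow> 'a set \<Rightarrow> real.
                (\<forall>(A, B)\<in>Xlim. \<forall>x\<in>A. \<forall>y\<in>B.
                   (\<Sum>A'\<in>{A'. A \<subseteq> A'}. \<Sum>B'\<in>{B'. B \<subseteq> B'}. q x y A' B') = p x y A B) \<and>
                (\<forall>A B x. A \<noteq> {} \<and> B \<noteq> {} \<and> B \<noteq> UNIV \<and> x \<in> A \<longrightarrow>
                   (\<Sum>y\<in>B. q x y A B) = (\<Sum>z\<in>UNIV - B. q x z A (insert z B))) \<and>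
                (\<forall>A B x y. A \<noteq> {} \<and> B \<noteq> {} \<and> x \<in> A \<and> y \<in> B \<longrightarrow> q x y A B \<ge> 0) \<and>
                (\<forall>A. A \<noteq> {} \<and> A \<noteq> UNIV \<longrightarrow>
                   (\<Sum>x\<in>A. \<Sum>y\<in>UNIV. q x y A UNIV) =
                   (\<Sum>z\<in>UNIV - A. \<Sum>y\<in>UNIV. q z y (insert z A) UNIV)) \<and>
                (\<Sum>x\<in>UNIV. \<Sum>y\<in>UNIV. q x y UNIV UNIV) = 1"
proof -
  obtain \<nu> t where nu: "set_pmf \<nu> \<subseteq> lin_orders"
    and t: "\<forall>x. \<forall>r\<in>lin_orders. set_pmf (t x r) \<subseteq> lin_orders"
    and rep: "\<forall>(A, B)\<in>Xlim. \<forall>x\<in>A. \<forall>y\<in>B.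
           p x y A B = (\<Sum>r\<in>Nx x A. \<Sum>r'\<in>Nx y B. pmf \<nu> r * pmf (t x r) r')"
    using assms unfolding cdru_rep_def by blast
  define P where "P x r r' = pmf \<nu> r * pmf (t x r) r'" for x r r'
  define q where "q x y A B = (\<Sum>r\<in>lin_orders. \<Sum>r'\<in>lin_orders.
      if lower r x = A \<and> lower r' y = B then P x r r' else 0)" for x y A B
  have Pn: "P x r r' \<ge> 0" for x r r' by (simp add: P_def)
  have tsum: "(\<Sum>r'\<in>lin_orders. P x r r') = pmf \<nu> r" if r: "r \<in> lin_orders" for x r
  proof -
    have "(\<Sum>r'\<in>lin_orders. P x r r') = pmf \<nu> r * (\<Sum>r'\<in>lin_orders. pmf (t x r) r')"
      by (simp add: P_def sum_distrib_left)
    also have "(\<Sum>r'\<in>lin_orders. pmf (t x r) r') = 1" using t r by (intro sum_pmf_lin) blast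
    finally show ?thesis by simp
  qed
  have nusum: "(\<Sum>r\<in>lin_orders. pmf \<nu> r) = 1" using nu by (rule sum_pmf_lin)
  define W where "W x A = (\<Sum>r\<in>lin_orders. if lower r x = A then pmf \<nu> r else 0)" for x A
  have qU: "(\<Sum>y\<in>UNIV. q x y A UNIV) = W x A" for x A
  proof -
    have "(\<Sum>y\<in>UNIV. q x y A UNIV) = (\<Sum>r\<in>lin_orders. \<Sum>r'\<in>lin_orders. \<Sum>y\<in>UNIV.
        if lower r x = A \<and> lower r' y = UNIV then P x r r' else 0)"
      unfolding q_def by (rule sum_swap2)
    also have "\<dots> = (\<Sum>r\<in>lin_orders. \<Sum>r'\<in>lin_orders. if lower r x = A then P x r r' else 0)"
    proof (intro sum.cong refl)
      fix r r' :: "('a \<times> 'a) set" assume r': "r' \<in> lin_orders"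
      have "(\<Sum>y\<in>UNIV. if lower r x = A \<and> lower r' y = UNIV then P x r r' else 0)
          = (\<Sum>y\<in>UNIV. if lower r' y = UNIV then (if lower r x = A then P x r r' else 0) else 0)"
        by (intro sum.cong refl) auto
      also have "\<dots> = (if lower r x = A then P x r r' else 0)" by (rule sum_top[OF r'])
      finally show "(\<Sum>y\<in>UNIV. if lower r x = A \<and> lower r' y = UNIV then P x r r' else 0)
          = (if lower r x = A then P x r r' else 0)" .
    qed
    also have "\<dots> = (\<Sum>r\<in>lin_orders. if lower r x = A then (\<Sum>r'\<in>lin_orders. P x r r') else 0)"
      by (intro sum.cong refl) auto
    also have "\<dots> = W x A" unfolding W_def by (intro sum.cong refl) (simp add: tsum)
    finally show ?thesis .
  qed
  have Wsum: "(\<Sum>x\<in>S. W x (F x)) = (\<Sum>r\<in>lin_orders. if \<exists>x\<in>S. lower r x = F x then pmf \<nu> r else 0)"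
    if uq: "\<And>r. r \<in> lin_orders \<Longrightarrow> \<forall>a\<in>S. \<forall>b\<in>S. lower r a = F a \<longrightarrow> lower r b = F b \<longrightarrow> a = b"
    for S :: "'a set" and F
  proof -
    have "(\<Sum>x\<in>S. W x (F x)) = (\<Sum>r\<in>lin_orders. \<Sum>x\<in>S. if lower r x = F x then pmf \<nu> r else 0)"
      unfolding W_def by (rule sum.swap)
    also have "\<dots> = (\<Sum>r\<in>lin_orders. if \<exists>x\<in>S. lower r x = F x then pmf \<nu> r else 0)"
      by (intro sum.cong refl sum_if_unique) (auto simp: uq)
    finally show ?thesis .
  qed
  have a: "(\<Sum>A'\<in>{A'. A \<subseteq> A'}. \<Sum>B'\<in>{B'. B \<subseteq> B'}. q x y A' B') = p x y A B"
    if AB: "(A, B) \<in> Xlim" and x: "x \<in> A" and y: "y \<in> B" for x y A B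
  proof -
    have "(\<Sum>A'\<in>{A'. A \<subseteq> A'}. \<Sum>B'\<in>{B'. B \<subseteq> B'}. q x y A' B')
        = (\<Sum>A'\<in>{A'. A \<subseteq> A'}. \<Sum>r\<in>lin_orders. \<Sum>r'\<in>lin_orders. \<Sum>B'\<in>{B'. B \<subseteq> B'}.
            if lower r x = A' \<and> lower r' y = B' then P x r r' else 0)"
      unfolding q_def by (intro sum.cong refl sum_swap2)
    also have "\<dots> = (\<Sum>r\<in>lin_orders. \<Sum>r'\<in>lin_orders. \<Sum>A'\<in>{A'. A \<subseteq> A'}. \<Sum>B'\<in>{B'. B \<subseteq> B'}.
            if lower r x = A' \<and> lower r' y = B' then P x r r' else 0)"
      by (rule sum_swap2)
    also have "\<dots> = (\<Sum>r\<in>lin_orders. \<Sum>r'\<in>lin_orders.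
            if A \<subseteq> lower r x \<and> B \<subseteq> lower r' y then P x r r' else 0)"
    proof (intro sum.cong refl)
      fix r r' :: "('a \<times> 'a) set"
      have "(\<Sum>A'\<in>{A'. A \<subseteq> A'}. \<Sum>B'\<in>{B'. B \<subseteq> B'}.
            if lower r x = A' \<and> lower r' y = B' then P x r r' else 0)
          = (\<Sum>A'\<in>{A'. A \<subseteq> A'}. if lower r x = A' then
               (\<Sum>B'\<in>{B'. B \<subseteq> B'}. if lower r' y = B' then P x r r' else 0) else 0)"
        by (intro sum.cong refl) auto
      also have "\<dots> = (if A \<subseteq> lower r x \<and> B \<subseteq> lower r' y then P x r r' else 0)"
        by simp
      finally show "(\<Sum>A'\<in>{A'. A \<subseteq> A'}. \<Sum>B'\<in>{B'. B \<subseteq> B'}.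
            if lower r x = A' \<and> lower r' y = B' then P x r r' else 0)
          = (if A \<subseteq> lower r x \<and> B \<subseteq> lower r' y then P x r r' else 0)" .
    qed
    also have "\<dots> = (\<Sum>r\<in>lin_orders. if r \<in> Nx x A then (\<Sum>r'\<in>lin_orders. if r' \<in> Nx y B then P x r r' else 0) else 0)"
      using Nx_iff[OF _ x] Nx_iff[OF _ y] by (intro sum.cong refl) auto
    also have "\<dots> = (\<Sum>r\<in>lin_orders \<inter> Nx x A. \<Sum>r'\<in>lin_orders \<inter> Nx y B. P x r r')"
      by (simp add: sum.inter_restrict)
    also have "lin_orders \<inter> Nx x A = Nx x A" using Nx_sub[of x A] by blast
    also have "lin_orders \<inter> Nx y B = Nx y B" using Nx_sub[of y B] by blast
    also have "(\<Sum>r\<in>Nx x A. \<Sum>r'\<in>Nx y B. P x r r') = p x y A B"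
    proof -
      have "p x y A B = (\<Sum>r\<in>Nx x A. \<Sum>r'\<in>Nx y B. pmf \<nu> r * pmf (t x r) r')"
        using rep AB x y by blast
      then show ?thesis by (simp add: P_def)
    qed
    finally show ?thesis .
  qed
  have b: "(\<Sum>y\<in>B. q x y A B) = (\<Sum>z\<in>UNIV - B. q x z A (insert z B))"
    if "B \<noteq> {}" "B \<noteq> UNIV" for x A B
  proof -
    have "(\<Sum>y\<in>B. q x y A B) = (\<Sum>r\<in>lin_orders. \<Sum>r'\<in>lin_orders. \<Sum>y\<in>B.
        if lower r x = A \<and> lower r' y = B then P x r r' else 0)"
      unfolding q_def by (rule sum_swap2)
    also have "\<dots> = (\<Sum>r\<in>lin_orders. \<Sum>r'\<in>lin_orders. \<Sum>z\<in>UNIV - B.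
        if lower r x = A \<and> lower r' z = insert z B then P x r r' else 0)"
    proof (rule sum.cong[OF refl], rule sum.cong[OF refl])
      fix r r' :: "('a \<times> 'a) set" assume r': "r' \<in> lin_orders"
      have "(\<Sum>y\<in>B. if lower r x = A \<and> lower r' y = B then P x r r' else 0)
          = (\<Sum>y\<in>B. if lower r' y = B then (if lower r x = A then P x r r' else 0) else 0)"
        by (intro sum.cong refl) auto
      also have "\<dots> = (if \<exists>y\<in>B. lower r' y = B then (if lower r x = A then P x r r' else 0) else 0)"
        by (rule sum_lower_unique[OF r'])
      also have "\<dots> = (if \<exists>z\<in>UNIV - B. lower r' z = insert z B then (if lower r x = A then P x r r' else 0) else 0)"
        using downset_iff[OF r' that] by simp
      also have "\<dots> = (\<Sum>z\<in>UNIV - B. if lower r' z = insert z B then (if lower r x = A then P x r r' else 0) else 0)"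
        by (rule sum_lower_unique2[OF r', symmetric])
      also have "\<dots> = (\<Sum>z\<in>UNIV - B. if lower r x = A \<and> lower r' z = insert z B then P x r r' else 0)"
        by (intro sum.cong refl) auto
      finally show "(\<Sum>y\<in>B. if lower r x = A \<and> lower r' y = B then P x r r' else 0)
          = (\<Sum>z\<in>UNIV - B. if lower r x = A \<and> lower r' z = insert z B then P x r r' else 0)" .
    qed
    also have "\<dots> = (\<Sum>z\<in>UNIV - B. q x z A (insert z B))"
      unfolding q_def by (rule sum_swap2[symmetric])
    finally show ?thesis .
  qed
  have c: "q x y A B \<ge> 0" for x y A B
    unfolding q_def using Pn by (auto intro!: sum_nonneg)
  have d: "(\<Sum>x\<in>A. \<Sum>y\<in>UNIV. q x y A UNIV) = (\<Sum>z\<in>UNIV - A. \<Sum>y\<in>UNIV. q z y (insert z A) UNIV)"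
    if "A \<noteq> {}" "A \<noteq> UNIV" for A
  proof -
    have "(\<Sum>x\<in>A. \<Sum>y\<in>UNIV. q x y A UNIV) = (\<Sum>x\<in>A. W x A)" by (simp add: qU)
    also have "\<dots> = (\<Sum>r\<in>lin_orders. if \<exists>x\<in>A. lower r x = A then pmf \<nu> r else 0)"
      by (rule Wsum[of A "\<lambda>_. A"]) (use lower_inj in metis)
    also have "\<dots> = (\<Sum>r\<in>lin_orders. if \<exists>z\<in>UNIV - A. lower r z = insert z A then pmf \<nu> r else 0)"
      by (intro sum.cong refl) (simp add: downset_iff[OF _ that])
    also have "\<dots> = (\<Sum>z\<in>UNIV - A. W z (insert z A))"
    proof (rule Wsum[symmetric])
      fix r :: "('a \<times> 'a) set" assume r: "r \<in> lin_orders"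
      show "\<forall>a\<in>UNIV - A. \<forall>b\<in>UNIV - A. lower r a = insert a A \<longrightarrow> lower r b = insert b A \<longrightarrow> a = b"
      proof (intro ballI impI)
        fix a b assume "a \<in> UNIV - A" "b \<in> UNIV - A" "lower r a = insert a A" "lower r b = insert b A"
        then show "a = b" using lower_uniq2[OF r, of a A b] by simp
      qed
    qed
    also have "\<dots> = (\<Sum>z\<in>UNIV - A. \<Sum>y\<in>UNIV. q z y (insert z A) UNIV)" by (simp add: qU)
    finally show ?thesis .
  qed
  have e: "(\<Sum>x\<in>UNIV. \<Sum>y\<in>UNIV. q x y UNIV UNIV) = 1"
  proof -
    have "(\<Sum>x\<in>UNIV. \<Sum>y\<in>UNIV. q x y UNIV UNIV) = (\<Sum>x\<in>UNIV. W x UNIV)" by (simp add: qU)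
    also have "\<dots> = (\<Sum>r\<in>lin_orders. if \<exists>x\<in>UNIV. lower r x = UNIV then pmf \<nu> r else 0)"
      by (rule Wsum[of UNIV "\<lambda>_. UNIV"]) (use lower_inj in metis)
    also have "\<dots> = (\<Sum>r\<in>lin_orders. pmf \<nu> r)"
      by (intro sum.cong refl) (use top_ex in auto)
    finally show ?thesis using nusum by simp
  qed
  show ?thesis
    apply (rule exI[of _ q])
    apply (intro conjI)
    subgoal using a by blast
    subgoal using b by blast
    subgoal using c by blast
    subgoal using d by blast
    subgoal using e by blast
    done
qed


lemma sum_perms_cons:
  fixes F :: "'a list \<Rightarrow> real"
  assumes "finite S" "S \<noteq> {}"
  shows "(\<Sum>xs\<in>permutations_of_set S. F xs) = (\<Sum>x\<in>S. \<Sum>xs\<in>permutations_of_set (S - {x}). F (x # xs))"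
proof -
  have "(\<Sum>xs\<in>permutations_of_set S. F xs)
      = (\<Sum>xs\<in>(\<Union>x\<in>S. (\<lambda>xs. x # xs) ` permutations_of_set (S - {x})). F xs)"
    using permutations_of_set_nonempty[OF assms(2)] by simp
  also have "\<dots> = (\<Sum>x\<in>S. \<Sum>xs\<in>(\<lambda>xs. x # xs) ` permutations_of_set (S - {x}). F xs)"
    by (rule sum.UNION_disjoint) (auto simp: assms(1))
  also have "\<dots> = (\<Sum>x\<in>S. \<Sum>xs\<in>permutations_of_set (S - {x}). F (x # xs))"
    by (rule sum.cong[OF refl], subst sum.reindex) (auto simp: inj_on_def)
  finally show ?thesis .
qed

lemma sum_perms_rev:
  fixes F :: "'a list \<Rightarrow> real"
  shows "(\<Sum>xs\<in>permutations_of_set S. F (rev xs)) = (\<Sum>xs\<in>permutations_of_set S. F xs)"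
proof -
  have "(\<Sum>xs\<in>permutations_of_set S. F xs) = (\<Sum>xs\<in>rev ` permutations_of_set S. F xs)"
    by simp
  also have "\<dots> = (\<Sum>xs\<in>permutations_of_set S. F (rev xs))"
    by (subst sum.reindex) (auto simp: inj_on_def)
  finally show ?thesis by simp
qed

lemma sum_perms_snoc:
  fixes F :: "'a list \<Rightarrow> real"
  assumes "finite S" "S \<noteq> {}"
  shows "(\<Sum>xs\<in>permutations_of_set S. F xs) = (\<Sum>x\<in>S. \<Sum>xs\<in>permutations_of_set (S - {x}). F (xs @ [x]))"
proof -
  have "(\<Sum>xs\<in>permutations_of_set S. F xs) = (\<Sum>xs\<in>permutations_of_set S. F (rev xs))"
    by (rule sum_perms_rev[symmetric])
  also have "\<dots> = (\<Sum>x\<in>S. \<Sum>xs\<in>permutations_of_set (S - {x}). F (rev xs @ [x]))"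
    using sum_perms_cons[OF assms, of "\<lambda>xs. F (rev xs)"] by simp
  also have "\<dots> = (\<Sum>x\<in>S. \<Sum>xs\<in>permutations_of_set (S - {x}). F (xs @ [x]))"
    by (rule sum.cong[OF refl], rule sum_perms_rev[of "\<lambda>xs. F (xs @ [_])"])
  finally show ?thesis .
qed

locale flow =
  fixes g :: "'a::finite \<Rightarrow> 'a set \<Rightarrow> real"
  assumes nn: "\<And>y B. y \<in> B \<Longrightarrow> 0 \<le> g y B"
    and cons: "\<And>B. B \<noteq> {} \<Longrightarrow> B \<noteq> UNIV \<Longrightarrow> (\<Sum>y\<in>B. g y B) = (\<Sum>z\<in>UNIV - B. g z (insert z B))"
begin

definition D :: "'a set \<Rightarrow> real" where
  "D S = (\<Sum>y\<in>S. g y S)"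

fun V :: "'a set \<Rightarrow> 'a list \<Rightarrow> real" where
  "V S [] = 1"
| "V S (u # us) = g u S / D S * V (S - {u}) us"

lemma D_nn: "D S \<ge> 0"
  unfolding D_def by (rule sum_nonneg) (simp add: nn)

lemma g_le_D: "y \<in> S \<Longrightarrow> g y S \<le> D S"
  unfolding D_def by (rule member_le_sum) (auto simp: nn)

lemma g_le_D_sub:
  assumes "u \<notin> S" "S \<noteq> {}"
  shows "g u (insert u S) \<le> D S"
proof -
  have "S \<noteq> UNIV" using assms(1) by auto
  then have "D S = (\<Sum>z\<in>UNIV - S. g z (insert z S))" unfolding D_def using cons assms(2) by simp
  moreover have "g u (insert u S) \<le> (\<Sum>z\<in>UNIV - S. g z (insert z S))"
    by (rule member_le_sum) (auto simp: assms nn)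
  ultimately show ?thesis by simp
qed

lemma div_D: "y \<in> S \<Longrightarrow> D S * (g y S / D S) = g y S"
proof -
  assume y: "y \<in> S"
  show ?thesis
  proof (cases "D S = 0")
    case True
    then have "g y S = 0" using g_le_D[OF y] nn[OF y] by simp
    then show ?thesis by simp
  qed simp
qed

lemma V_append: "V S (us @ vs) = V S us * V (S - set us) vs"
proof (induction us arbitrary: S)
  case Nil then show ?case by simp
next
  case (Cons u us)
  have "S - {u} - set us = S - set (u # us)" by auto
  then show ?case using Cons.IH[of "S - {u}"] by simp
qed

lemma V_nn: "distinct us \<Longrightarrow> set us \<subseteq> S \<Longrightarrow> V S us \<ge> 0"
proof (induction us arbitrary: S)
  case Nil then show ?case by simp
next
  case (Cons u us)
  have "g u S \<ge> 0" using Cons.prems nn by simp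
  moreover have "V (S - {u}) us \<ge> 0" using Cons.prems by (intro Cons.IH) auto
  ultimately show ?case using D_nn by simp
qed

lemma V_sum1:
  assumes "S \<noteq> {}" "D S > 0"
  shows "(\<Sum>vs\<in>permutations_of_set S. V S vs) = 1"
  using finite[of S] assms
proof (induction S rule: finite_psubset_induct)
  case (psubset S)
  have "(\<Sum>vs\<in>permutations_of_set S. V S vs)
      = (\<Sum>u\<in>S. \<Sum>ws\<in>permutations_of_set (S - {u}). V S (u # ws))"
    by (rule sum_perms_cons) (auto simp: psubset.prems)
  also have "\<dots> = (\<Sum>u\<in>S. g u S / D S)"
  proof (rule sum.cong[OF refl])
    fix u assume u: "u \<in> S"
    have "(\<Sum>ws\<in>permutations_of_set (S - {u}). V S (u # ws))
        = g u S / D S * (\<Sum>ws\<in>permutations_of_set (S - {u}). V (S - {u}) ws)"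
      by (simp add: sum_distrib_left)
    also have "\<dots> = g u S / D S"
    proof (cases "S - {u} = {}")
      case True
      have "(\<Sum>ws\<in>permutations_of_set (S - {u}). V (S - {u}) ws) = 1" unfolding True by simp
      then show ?thesis by simp
    next
      case False
      show ?thesis
      proof (cases "g u S = 0")
        case False
        then have "g u S > 0" using nn[OF u] by simp
        moreover have "g u (insert u (S - {u})) \<le> D (S - {u})"
          by (rule g_le_D_sub) (use \<open>S - {u} \<noteq> {}\<close> in auto)
        ultimately have "D (S - {u}) > 0" using u by (simp add: insert_absorb)
        then have "(\<Sum>ws\<in>permutations_of_set (S - {u}). V (S - {u}) ws) = 1"
          using psubset.IH[of "S - {u}"] u \<open>S - {u} \<noteq> {}\<close> by auto
        then show ?thesis by simp
      qed simp
    qed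
    finally show "(\<Sum>ws\<in>permutations_of_set (S - {u}). V S (u # ws)) = g u S / D S" .
  qed
  also have "\<dots> = D S / D S" by (simp only: D_def sum_divide_distrib)
  also have "\<dots> = 1" using psubset.prems by simp
  finally show ?case .
qed

lemma V_top:
  assumes "UNIV - C \<noteq> {}" and c: "D UNIV > 0"
  shows "(\<Sum>us\<in>permutations_of_set C. V UNIV us) = D (UNIV - C) / D UNIV"
  using finite[of C] assms(1)
proof (induction C rule: finite_psubset_induct)
  case (psubset C)
  show ?case
  proof (cases "C = {}")
    case True then show ?thesis using c by simp
  next
    case False
    define B where "B = UNIV - C"
    have B: "B \<noteq> {}" "B \<noteq> UNIV" using psubset.prems False by (auto simp: B_def)
    have "(\<Sum>us\<in>permutations_of_set C. V UNIV us)
        = (\<Sum>z\<in>C. \<Sum>us\<in>permutations_of_set (C - {z}). V UNIV (us @ [z]))"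
      by (rule sum_perms_snoc) (auto simp: False)
    also have "\<dots> = (\<Sum>z\<in>C. (\<Sum>us\<in>permutations_of_set (C - {z}). V UNIV us) * (g z (insert z B) / D (insert z B)))"
    proof (rule sum.cong[OF refl])
      fix z assume z: "z \<in> C"
      have "(\<Sum>us\<in>permutations_of_set (C - {z}). V UNIV (us @ [z]))
          = (\<Sum>us\<in>permutations_of_set (C - {z}). V UNIV us * (g z (insert z B) / D (insert z B)))"
      proof (rule sum.cong[OF refl])
        fix us assume "us \<in> permutations_of_set (C - {z})"
        then have "set us = C - {z}" by (simp add: permutations_of_set_def)
        then have "UNIV - set us = insert z B" using z by (auto simp: B_def)
        then show "V UNIV (us @ [z]) = V UNIV us * (g z (insert z B) / D (insert z B))"
          by (simp add: V_append)
      qed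
      then show "(\<Sum>us\<in>permutations_of_set (C - {z}). V UNIV (us @ [z]))
          = (\<Sum>us\<in>permutations_of_set (C - {z}). V UNIV us) * (g z (insert z B) / D (insert z B))"
        by (simp only: sum_distrib_right)
    qed
    also have "\<dots> = (\<Sum>z\<in>C. g z (insert z B) / D UNIV)"
    proof (rule sum.cong[OF refl])
      fix z assume z: "z \<in> C"
      have "UNIV - (C - {z}) = insert z B" using z by (auto simp: B_def)
      moreover have "C - {z} \<subset> C" using z by auto
      ultimately have "(\<Sum>us\<in>permutations_of_set (C - {z}). V UNIV us) = D (insert z B) / D UNIV"
        using psubset.IH[of "C - {z}"] by auto
      then show "(\<Sum>us\<in>permutations_of_set (C - {z}). V UNIV us) * (g z (insert z B) / D (insert z B))
          = g z (insert z B) / D UNIV"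
      proof (cases "D (insert z B) = 0")
        case True
        then have "g z (insert z B) = 0" using g_le_D[of z "insert z B"] nn[of z "insert z B"] by simp
        then show ?thesis using True by simp
      next
        case False
        then show ?thesis using \<open>(\<Sum>us\<in>permutations_of_set (C - {z}). V UNIV us) = D (insert z B) / D UNIV\<close>
          by (simp add: field_simps)
      qed
    qed
    also have "\<dots> = (\<Sum>z\<in>UNIV - B. g z (insert z B)) / D UNIV"
    proof -
      have "UNIV - B = C" by (auto simp: B_def)
      then show ?thesis by (simp add: sum_divide_distrib)
    qed
    also have "(\<Sum>z\<in>UNIV - B. g z (insert z B)) = D B"
      using cons[OF B] by (simp add: D_def)
    finally show ?thesis by (simp add: B_def)
  qed
qed

end


context flow
begin

lemma marg:
  assumes c: "D UNIV > 0" and y: "y \<in> B"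
  shows "(\<Sum>xs\<in>permutations_of_set UNIV. if lower (ord_of xs) y = B then V UNIV xs else 0) = g y B / D UNIV"
proof -
  define P where "P = permutations_of_set (UNIV - B) \<times> permutations_of_set (B - {y})"
  define h where "h uv = (case uv of (us, vs) \<Rightarrow> us @ y # vs)" for uv :: "'a list \<times> 'a list"
  have set_eq: "{xs \<in> permutations_of_set UNIV. lower (ord_of xs) y = B} = h ` P"
  proof (intro equalityI subsetI)
    fix xs assume "xs \<in> {xs \<in> permutations_of_set UNIV. lower (ord_of xs) y = B}"
    then have xs: "set xs = UNIV" "distinct xs" "lower (ord_of xs) y = B"
      by (auto simp: permutations_of_set_def)
    have "y \<in> set xs" using xs(1) by simp
    then obtain us vs where e: "xs = us @ y # vs" using split_list by metis
    have d: "distinct (us @ y # vs)" using xs(2) e by simp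
    have L: "insert y (set vs) = B" using lower_ord_of[OF d] xs(3) e by simp
    have yvs: "y \<notin> set vs" "y \<notin> set us" "set us \<inter> set vs = {}" using d by auto
    have svs: "set vs = B - {y}" using L yvs(1) by auto
    have "set us \<union> insert y (set vs) = UNIV" using xs(1) e by simp
    then have sus: "set us = UNIV - B" using L yvs by auto
    have "(us, vs) \<in> P" unfolding P_def permutations_of_set_def using d svs sus by simp
    then show "xs \<in> h ` P" unfolding e h_def by force
  next
    fix xs assume "xs \<in> h ` P"
    then obtain us vs where uv: "(us, vs) \<in> P" and e: "xs = us @ y # vs" unfolding h_def by auto
    have u: "set us = UNIV - B" "distinct us" and v: "set vs = B - {y}" "distinct vs"
      using uv by (auto simp: P_def permutations_of_set_def)
    have d: "distinct (us @ y # vs)" using u v y by auto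
    have "set (us @ y # vs) = UNIV" using u v y by auto
    moreover have "lower (ord_of (us @ y # vs)) y = B" using lower_ord_of[OF d] v y by auto
    ultimately show "xs \<in> {xs \<in> permutations_of_set UNIV. lower (ord_of xs) y = B}"
      using d e by (simp add: permutations_of_set_def)
  qed
  have inj: "inj_on h P"
  proof (rule inj_onI)
    fix a b assume a: "a \<in> P" and b: "b \<in> P" and hab: "h a = h b"
    obtain us vs where ae: "a = (us, vs)" by (cases a)
    obtain us' vs' where be: "b = (us', vs')" by (cases b)
    have "y \<notin> set us" "y \<notin> set vs" using a y by (auto simp: ae P_def permutations_of_set_def)
    then show "a = b" using hab append_Cons_eq_iff[of y us vs us' vs'] by (simp add: ae be h_def)
  qed
  have "(\<Sum>xs\<in>permutations_of_set UNIV. if lower (ord_of xs) y = B then V UNIV xs else 0)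
      = (\<Sum>xs\<in>{xs \<in> permutations_of_set UNIV. lower (ord_of xs) y = B}. V UNIV xs)"
    by (rule sum.inter_filter[symmetric]) simp
  also have "\<dots> = (\<Sum>uv\<in>P. V UNIV (h uv))"
    unfolding set_eq by (rule sum.reindex[OF inj, unfolded comp_def])
  also have "\<dots> = (\<Sum>us\<in>permutations_of_set (UNIV - B). \<Sum>vs\<in>permutations_of_set (B - {y}). V UNIV (us @ y # vs))"
    unfolding P_def h_def by (simp only: sum.cartesian_product) (rule sum.cong, auto)
  also have "\<dots> = (\<Sum>us\<in>permutations_of_set (UNIV - B). \<Sum>vs\<in>permutations_of_set (B - {y}).
        V UNIV us * (g y B / D B) * V (B - {y}) vs)"
  proof (rule sum.cong[OF refl], rule sum.cong[OF refl])
    fix us vs assume "us \<in> permutations_of_set (UNIV - B)"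
    then have "UNIV - set us = B" by (auto simp: permutations_of_set_def)
    then show "V UNIV (us @ y # vs) = V UNIV us * (g y B / D B) * V (B - {y}) vs"
      by (simp add: V_append)
  qed
  also have "\<dots> = (\<Sum>us\<in>permutations_of_set (UNIV - B). V UNIV us) * (g y B / D B) *
        (\<Sum>vs\<in>permutations_of_set (B - {y}). V (B - {y}) vs)"
  proof -
    have "(\<Sum>us\<in>permutations_of_set (UNIV - B). \<Sum>vs\<in>permutations_of_set (B - {y}).
        V UNIV us * (g y B / D B) * V (B - {y}) vs)
      = (\<Sum>us\<in>permutations_of_set (UNIV - B). V UNIV us * (g y B / D B) *
        (\<Sum>vs\<in>permutations_of_set (B - {y}). V (B - {y}) vs))"
      by (rule sum.cong[OF refl]) (simp only: sum_distrib_left)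
    also have "\<dots> = (\<Sum>us\<in>permutations_of_set (UNIV - B). V UNIV us) * (g y B / D B) *
        (\<Sum>vs\<in>permutations_of_set (B - {y}). V (B - {y}) vs)"
      by (simp only: sum_distrib_right)
    finally show ?thesis .
  qed
  also have "(\<Sum>us\<in>permutations_of_set (UNIV - B). V UNIV us) = D B / D UNIV"
  proof -
    have "UNIV - (UNIV - B) = B" by auto
    then show ?thesis using V_top[of "UNIV - B", OF _ c] y by auto
  qed
  also have "D B / D UNIV * (g y B / D B) * (\<Sum>vs\<in>permutations_of_set (B - {y}). V (B - {y}) vs)
      = g y B / D UNIV"
  proof (cases "g y B = 0")
    case True then show ?thesis by simp
  next
    case False
    then have gp: "g y B > 0" using nn[OF y] by simp
    then have DB: "D B > 0" using g_le_D[OF y] by simp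
    have S1: "(\<Sum>vs\<in>permutations_of_set (B - {y}). V (B - {y}) vs) = 1"
    proof (cases "B - {y} = {}")
      case True
      show ?thesis unfolding True by simp
    next
      case False
      have "g y (insert y (B - {y})) \<le> D (B - {y})" by (rule g_le_D_sub) (use False in auto)
      then have "D (B - {y}) > 0" using gp y by (simp add: insert_absorb)
      then show ?thesis using V_sum1[OF False] by simp
    qed
    show ?thesis unfolding S1 using DB by (simp add: field_simps)
  qed
  finally show ?thesis .
qed

lemma flow_pmf:
  assumes c: "D UNIV > 0"
  shows "\<exists>\<pi>. set_pmf \<pi> \<subseteq> lin_orders \<and>
    (\<forall>y B. y \<in> B \<longrightarrow> (\<Sum>r\<in>lin_orders. if lower r y = B then pmf \<pi> r else 0) = g y B / D UNIV)"
proof -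
  define X where "X r = {xs \<in> permutations_of_set (UNIV :: 'a set). ord_of xs = r}" for r
  define f where "f r = (\<Sum>xs\<in>X r. V UNIV xs)" for r
  have grp: "(\<Sum>r\<in>lin_orders. \<Sum>xs\<in>X r. H xs) = (\<Sum>xs\<in>permutations_of_set UNIV. H xs)"
    for H :: "'a list \<Rightarrow> real"
    unfolding X_def
    by (rule sum.group[OF finite_permutations_of_set]) (auto simp: permutations_of_set_def intro: ord_of_lin)
  have f0: "\<forall>r\<in>lin_orders. f r \<ge> 0"
    unfolding f_def X_def by (auto intro!: sum_nonneg V_nn simp: permutations_of_set_def)
  have f1: "(\<Sum>r\<in>lin_orders. f r) = 1"
    unfolding f_def grp using V_sum1[OF _ c] by simp
  obtain \<pi> where pi: "set_pmf \<pi> \<subseteq> lin_orders" "\<forall>r\<in>lin_orders. pmf \<pi> r = f r"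
    using mk_pmf[OF _ f0 f1] by auto
  have "(\<Sum>r\<in>lin_orders. if lower r y = B then pmf \<pi> r else 0) = g y B / D UNIV" if y: "y \<in> B" for y B
  proof -
    have "(\<Sum>r\<in>lin_orders. if lower r y = B then pmf \<pi> r else 0)
        = (\<Sum>r\<in>lin_orders. \<Sum>xs\<in>X r. if lower (ord_of xs) y = B then V UNIV xs else 0)"
    proof (rule sum.cong[OF refl])
      fix r :: "('a \<times> 'a) set" assume r: "r \<in> lin_orders"
      have "(\<Sum>xs\<in>X r. if lower (ord_of xs) y = B then V UNIV xs else 0)
          = (\<Sum>xs\<in>X r. if lower r y = B then V UNIV xs else 0)"
        by (rule sum.cong[OF refl]) (simp add: X_def)
      also have "\<dots> = (if lower r y = B then pmf \<pi> r else 0)"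
        using pi r by (cases "lower r y = B") (simp_all add: f_def)
      finally show "(if lower r y = B then pmf \<pi> r else 0)
          = (\<Sum>xs\<in>X r. if lower (ord_of xs) y = B then V UNIV xs else 0)" by simp
    qed
    also have "\<dots> = g y B / D UNIV" unfolding grp by (rule marg[OF c y])
    finally show ?thesis .
  qed
  then show ?thesis using pi by blast
qed

lemma flow_zero:
  assumes c: "D UNIV = 0" and y: "y \<in> B"
  shows "g y B = 0"
proof -
  have "D B = 0" if "B \<noteq> {}" for B
    using finite[of "UNIV - B"] that
  proof (induction "UNIV - B" arbitrary: B rule: finite_psubset_induct)
    case (psubset B)
    show ?case
    proof (cases "B = UNIV")
      case True then show ?thesis using c by simp
    next
      case False
      have "D B = (\<Sum>z\<in>UNIV - B. g z (insert z B))" using cons[OF psubset.prems False] by (simp add: D_def)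
      also have "\<dots> = 0"
      proof (rule sum.neutral, rule ballI)
        fix z assume z: "z \<in> UNIV - B"
        have "UNIV - insert z B \<subset> UNIV - B" using z by auto
        then have "D (insert z B) = 0" using psubset.hyps by auto
        then show "g z (insert z B) = 0" using g_le_D[of z "insert z B"] nn[of z "insert z B"] by simp
      qed
      finally show ?thesis .
    qed
  qed
  then have "D B = 0" using y by auto
  then show ?thesis using g_le_D[OF y] nn[OF y] by simp
qed

end


lemma sum_sup_split:
  fixes L :: "'b \<Rightarrow> 'a::finite set" and F :: "'b \<Rightarrow> 'a set \<Rightarrow> real"
  assumes "finite R"
  shows "(\<Sum>r\<in>R. if A \<subseteq> L r then F r (L r) else 0)
       = (\<Sum>A'\<in>{A'. A \<subseteq> A'}. \<Sum>r\<in>R. if L r = A' then F r A' else 0)"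
proof -
  have "(\<Sum>A'\<in>{A'. A \<subseteq> A'}. \<Sum>r\<in>R. if L r = A' then F r A' else 0)
      = (\<Sum>r\<in>R. \<Sum>A'\<in>{A'. A \<subseteq> A'}. if L r = A' then F r A' else 0)"
    by (rule sum.swap)
  also have "\<dots> = (\<Sum>r\<in>R. if A \<subseteq> L r then F r (L r) else 0)"
    by (rule sum.cong[OF refl]) simp
  finally show ?thesis by simp
qed

lemma three_to_one:
  fixes Xlim :: "('a::finite set \<times> 'a set) set"
    and q :: "'a \<Rightarrow> 'a \<Rightarrow> 'a set \<Rightarrow> 'a set \<Rightarrow> real"
  assumes qa: "\<forall>(A, B)\<in>Xlim. \<forall>x\<in>A. \<forall>y\<in>B.
                   (\<Sum>A'\<in>{A'. A \<subseteq> A'}. \<Sum>B'\<in>{B'. B \<subseteq> B'}. q x y A' B') = p x y A B"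
    and qb: "\<forall>A B x. A \<noteq> {} \<and> B \<noteq> {} \<and> B \<noteq> UNIV \<and> x \<in> A \<longrightarrow>
                   (\<Sum>y\<in>B. q x y A B) = (\<Sum>z\<in>UNIV - B. q x z A (insert z B))"
    and qc: "\<forall>A B x y. A \<noteq> {} \<and> B \<noteq> {} \<and> x \<in> A \<and> y \<in> B \<longrightarrow> q x y A B \<ge> 0"
    and qd: "\<forall>A. A \<noteq> {} \<and> A \<noteq> UNIV \<longrightarrow>
                   (\<Sum>x\<in>A. \<Sum>y\<in>UNIV. q x y A UNIV) =
                   (\<Sum>z\<in>UNIV - A. \<Sum>y\<in>UNIV. q z y (insert z A) UNIV)"
    and qe: "(\<Sum>x\<in>UNIV. \<Sum>y\<in>UNIV. q x y UNIV UNIV) = 1"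
  shows "cdru_rep Xlim p"
proof -
  obtain o0 :: "('a \<times> 'a) set" where o0: "o0 \<in> lin_orders" using lin_ne by blast
  define g1 where "g1 x A = (\<Sum>y\<in>UNIV. q x y A UNIV)" for x A
  interpret F1: flow g1
  proof
    fix y :: 'a and B assume "y \<in> B"
    then show "0 \<le> g1 y B" unfolding g1_def
    proof (intro sum_nonneg)
      fix x assume "y \<in> B"
      then have "B \<noteq> {}" "(UNIV :: 'a set) \<noteq> {}" by auto
      then show "0 \<le> q y x B UNIV" using qc \<open>y \<in> B\<close> by blast
    qed
  next
    fix B :: "'a set" assume "B \<noteq> {}" "B \<noteq> UNIV"
    then show "(\<Sum>y\<in>B. g1 y B) = (\<Sum>z\<in>UNIV - B. g1 z (insert z B))"
      unfolding g1_def using qd by blast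
  qed
  have D1: "F1.D UNIV = 1" unfolding F1.D_def g1_def using qe by simp
  obtain \<nu> where nu: "set_pmf \<nu> \<subseteq> lin_orders"
    and numarg: "\<And>y B. y \<in> B \<Longrightarrow> (\<Sum>r\<in>lin_orders. if lower r y = B then pmf \<nu> r else 0) = g1 y B"
    using F1.flow_pmf D1 by auto
  have fl2: "flow (\<lambda>y B. q x y A B)" if x: "x \<in> A" for x A
  proof
    fix y :: 'a and B assume "y \<in> B"
    then show "0 \<le> q x y A B" using qc x by blast
  next
    fix B :: "'a set" assume "B \<noteq> {}" "B \<noteq> UNIV"
    then show "(\<Sum>y\<in>B. q x y A B) = (\<Sum>z\<in>UNIV - B. q x z A (insert z B))"
      using qb x by blast
  qed
  have D2: "flow.D (\<lambda>y B. q x y A B) UNIV = g1 x A" if "x \<in> A" for x A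
    by (simp add: flow.D_def[OF fl2[OF that]] g1_def)
  have "\<exists>\<pi>. x \<in> A \<and> g1 x A > 0 \<longrightarrow> set_pmf \<pi> \<subseteq> lin_orders \<and>
      (\<forall>y B. y \<in> B \<longrightarrow> (\<Sum>r\<in>lin_orders. if lower r y = B then pmf \<pi> r else 0) = q x y A B / g1 x A)"
    for x A
  proof (cases "x \<in> A \<and> g1 x A > 0")
    case True
    then show ?thesis using flow.flow_pmf[OF fl2[of x A]] D2[of x A] True by auto
  qed blast
  then have "\<forall>x. \<forall>A. \<exists>\<pi>. x \<in> A \<and> g1 x A > 0 \<longrightarrow> set_pmf \<pi> \<subseteq> lin_orders \<and>
      (\<forall>y B. y \<in> B \<longrightarrow> (\<Sum>r\<in>lin_orders. if lower r y = B then pmf \<pi> r else 0) = q x y A B / g1 x A)"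
    by blast
  then have "\<exists>K. \<forall>x. \<forall>A. x \<in> A \<and> g1 x A > 0 \<longrightarrow> set_pmf (K x A) \<subseteq> lin_orders \<and>
      (\<forall>y B. y \<in> B \<longrightarrow> (\<Sum>r\<in>lin_orders. if lower r y = B then pmf (K x A) r else 0) = q x y A B / g1 x A)"
    by (simp only: choice_iff)
  then obtain K where K: "\<forall>x. \<forall>A. x \<in> A \<and> g1 x A > 0 \<longrightarrow> set_pmf (K x A) \<subseteq> lin_orders \<and>
      (\<forall>y B. y \<in> B \<longrightarrow> (\<Sum>r\<in>lin_orders. if lower r y = B then pmf (K x A) r else 0) = q x y A B / g1 x A)"
    by blast
  define t' where "t' x A = (if g1 x A > 0 then K x A else return_pmf o0)" for x A
  define t where "t x r = t' x (lower r x)" for x r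
  have xl: "x \<in> lower r x" for x :: 'a and r by (simp add: lower_def)
  have t_sup: "\<forall>x. \<forall>r\<in>lin_orders. set_pmf (t x r) \<subseteq> lin_orders"
    using K o0 xl by (auto simp: t_def t'_def)
  have key: "g1 x A' * (\<Sum>r'\<in>lin_orders. if B \<subseteq> lower r' y then pmf (t' x A') r' else 0)
      = (\<Sum>B'\<in>{B'. B \<subseteq> B'}. q x y A' B')" if x: "x \<in> A'" and y: "y \<in> B" for x y A' B
  proof (cases "g1 x A' > 0")
    case True
    have "(\<Sum>r'\<in>lin_orders. if B \<subseteq> lower r' y then pmf (t' x A') r' else 0)
        = (\<Sum>B'\<in>{B'. B \<subseteq> B'}. \<Sum>r'\<in>lin_orders. if lower r' y = B' then pmf (K x A') r' else 0)"
    proof -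
      have tK: "t' x A' = K x A'" using True by (simp add: t'_def)
      show ?thesis unfolding tK
        using sum_sup_split[where F="\<lambda>r' B'. pmf (K x A') r'" and L="\<lambda>r'. lower r' y" and R=lin_orders and A=B]
        by simp
    qed
    also have "\<dots> = (\<Sum>B'\<in>{B'. B \<subseteq> B'}. q x y A' B' / g1 x A')"
    proof (rule sum.cong[OF refl])
      fix B' assume "B' \<in> {B'. B \<subseteq> B'}"
      then have "y \<in> B'" using y by auto
      then show "(\<Sum>r'\<in>lin_orders. if lower r' y = B' then pmf (K x A') r' else 0) = q x y A' B' / g1 x A'"
        using K x True by blast
    qed
    finally show ?thesis using True by (simp add: sum_divide_distrib[symmetric])
  next
    case False
    then have "g1 x A' = 0" using F1.nn[OF x] by simp
    then have z: "q x y A' B' = 0" if "B \<subseteq> B'" for B'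
      using flow.flow_zero[OF fl2[OF x], of y B'] D2[OF x] that y by auto
    show ?thesis using \<open>g1 x A' = 0\<close> z by simp
  qed
  have rep: "p x y A B = (\<Sum>r\<in>Nx x A. \<Sum>r'\<in>Nx y B. pmf \<nu> r * pmf (t x r) r')"
    if AB: "(A, B) \<in> Xlim" and x: "x \<in> A" and y: "y \<in> B" for x y A B
  proof -
    define I where "I A' = (\<Sum>r'\<in>lin_orders. if B \<subseteq> lower r' y then pmf (t' x A') r' else 0)" for A'
    have "(\<Sum>r\<in>Nx x A. \<Sum>r'\<in>Nx y B. pmf \<nu> r * pmf (t x r) r')
        = (\<Sum>r\<in>lin_orders \<inter> Nx x A. \<Sum>r'\<in>lin_orders \<inter> Nx y B. pmf \<nu> r * pmf (t x r) r')"
    proof -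
      have "lin_orders \<inter> Nx x A = Nx x A" using Nx_sub[of x A] by blast
      moreover have "lin_orders \<inter> Nx y B = Nx y B" using Nx_sub[of y B] by blast
      ultimately show ?thesis by simp
    qed
    also have "\<dots> = (\<Sum>r\<in>lin_orders. if r \<in> Nx x A then
        (\<Sum>r'\<in>lin_orders. if r' \<in> Nx y B then pmf \<nu> r * pmf (t x r) r' else 0) else 0)"
      by (simp add: sum.inter_restrict)
    also have "\<dots> = (\<Sum>r\<in>lin_orders. if A \<subseteq> lower r x then pmf \<nu> r * I (lower r x) else 0)"
    proof (rule sum.cong[OF refl])
      fix r :: "('a \<times> 'a) set" assume r: "r \<in> lin_orders"
      have "(\<Sum>r'\<in>lin_orders. if r' \<in> Nx y B then pmf \<nu> r * pmf (t x r) r' else 0)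
          = pmf \<nu> r * I (lower r x)"
        unfolding I_def sum_distrib_left t_def
        by (rule sum.cong[OF refl]) (use Nx_iff[OF _ y] in auto)
      then show "(if r \<in> Nx x A then (\<Sum>r'\<in>lin_orders. if r' \<in> Nx y B then pmf \<nu> r * pmf (t x r) r' else 0) else 0)
          = (if A \<subseteq> lower r x then pmf \<nu> r * I (lower r x) else 0)"
        using Nx_iff[OF r x] by simp
    qed
    also have "\<dots> = (\<Sum>A'\<in>{A'. A \<subseteq> A'}. \<Sum>r\<in>lin_orders. if lower r x = A' then pmf \<nu> r * I A' else 0)"
      by (rule sum_sup_split) simp
    also have "\<dots> = (\<Sum>A'\<in>{A'. A \<subseteq> A'}. g1 x A' * I A')"
    proof (rule sum.cong[OF refl])
      fix A' assume "A' \<in> {A'. A \<subseteq> A'}"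
      then have xA': "x \<in> A'" using x by auto
      have "(\<Sum>r\<in>lin_orders. if lower r x = A' then pmf \<nu> r * I A' else 0)
          = (\<Sum>r\<in>lin_orders. if lower r x = A' then pmf \<nu> r else 0) * I A'"
        by (subst sum_distrib_right) (rule sum.cong, auto)
      also have "\<dots> = g1 x A' * I A'" using numarg[OF xA'] by simp
      finally show "(\<Sum>r\<in>lin_orders. if lower r x = A' then pmf \<nu> r * I A' else 0) = g1 x A' * I A'" .
    qed
    also have "\<dots> = (\<Sum>A'\<in>{A'. A \<subseteq> A'}. \<Sum>B'\<in>{B'. B \<subseteq> B'}. q x y A' B')"
    proof (rule sum.cong[OF refl])
      fix A' assume "A' \<in> {A'. A \<subseteq> A'}"
      then have xA': "x \<in> A'" using x by auto
      show "g1 x A' * I A' = (\<Sum>B'\<in>{B'. B \<subseteq> B'}. q x y A' B')"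
        unfolding I_def by (rule key[OF xA' y])
    qed
    also have "\<dots> = p x y A B" using qa AB x y by blast
    finally show ?thesis by simp
  qed
  have rep': "\<forall>(A, B)\<in>Xlim. \<forall>x\<in>A. \<forall>y\<in>B.
         p x y A B = (\<Sum>r\<in>Nx x A. \<Sum>r'\<in>Nx y B. pmf \<nu> r * pmf (t x r) r')"
  proof (intro ballI)
    fix AB assume AB: "AB \<in> Xlim"
    obtain A B where e: "AB = (A, B)" by (cases AB)
    show "case AB of (A, B) \<Rightarrow> \<forall>x\<in>A. \<forall>y\<in>B. p x y A B = (\<Sum>r\<in>Nx x A. \<Sum>r'\<in>Nx y B. pmf \<nu> r * pmf (t x r) r')"
      unfolding e using rep AB e by simp
  qed
  show ?thesis unfolding cdru_rep_def
    by (rule exI[of _ \<nu>], rule exI[of _ t]) (intro conjI nu t_sup rep')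
qed


theorem theorem7:
  fixes Xlim :: "('a::finite set \<times> 'a set) set"
    and p :: "'a \<Rightarrow> 'a \<Rightarrow> 'a set \<Rightarrow> 'a set \<Rightarrow> real"
  assumes Xlim_sub: "\<forall>(A, B)\<in>Xlim. A \<noteq> {} \<and> B \<noteq> {}"
    and p_rule: "observed_rjcr Xlim p"
  shows "(cdru_rep Xlim p
          \<longleftrightarrow> (\<exists>r. (\<forall>rw\<in>E_rows. r rw \<ge> 0) \<and>
                 (\<forall>cl\<in>E_cols Xlim. (\<Sum>rw\<in>E_rows. r rw * E_mat rw cl) = (case cl of (x, y, A, B) \<Rightarrow> p x y A B))))
       \<and> (cdru_rep Xlim p
          \<longleftrightarrow> (\<exists>q :: 'a \<Rightarrow> 'a \<Rightarrow> 'a set \<Rightarrow> 'a set \<Rightarrow> real.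
                (\<forall>(A, B)\<in>Xlim. \<forall>x\<in>A. \<forall>y\<in>B.
                   (\<Sum>A'\<in>{A'. A \<subseteq> A'}. \<Sum>B'\<in>{B'. B \<subseteq> B'}. q x y A' B') = p x y A B) \<and>
                (\<forall>A B x. A \<noteq> {} \<and> B \<noteq> {} \<and> B \<noteq> UNIV \<and> x \<in> A \<longrightarrow>
                   (\<Sum>y\<in>B. q x y A B) = (\<Sum>z\<in>UNIV - B. q x z A (insert z B))) \<and>
                (\<forall>A B x y. A \<noteq> {} \<and> B \<noteq> {} \<and> x \<in> A \<and> y \<in> B \<longrightarrow> q x y A B \<ge> 0) \<and>
                (\<forall>A. A \<noteq> {} \<and> A \<noteq> UNIV \<longrightarrow>
                   (\<Sum>x\<in>A. \<Sum>y\<in>UNIV. q x y A UNIV) =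
                   (\<Sum>z\<in>UNIV - A. \<Sum>y\<in>UNIV. q z y (insert z A) UNIV)) \<and>
                (\<Sum>x\<in>UNIV. \<Sum>y\<in>UNIV. q x y UNIV UNIV) = 1))"
proof -
  have P12: "cdru_rep Xlim p
          \<longleftrightarrow> (\<exists>r. (\<forall>rw\<in>E_rows. r rw \<ge> 0) \<and>
                 (\<forall>cl\<in>E_cols Xlim. (\<Sum>rw\<in>E_rows. r rw * E_mat rw cl) = (case cl of (x, y, A, B) \<Rightarrow> p x y A B)))"
  proof
    assume "cdru_rep Xlim p"
    then show "\<exists>r. (\<forall>rw\<in>E_rows. r rw \<ge> 0) \<and>
                 (\<forall>cl\<in>E_cols Xlim. (\<Sum>rw\<in>E_rows. r rw * E_mat rw cl) = (case cl of (x, y, A, B) \<Rightarrow> p x y A B))"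
      by (rule one_to_two)
  next
    assume "\<exists>r. (\<forall>rw\<in>E_rows. r rw \<ge> 0) \<and>
                 (\<forall>cl\<in>E_cols Xlim. (\<Sum>rw\<in>E_rows. r rw * E_mat rw cl) = (case cl of (x, y, A, B) \<Rightarrow> p x y A B))"
    then obtain R where R: "\<forall>rw\<in>E_rows. R rw \<ge> 0"
      "\<forall>cl\<in>E_cols Xlim. (\<Sum>rw\<in>E_rows. R rw * E_mat rw cl) = (case cl of (x, y, A, B) \<Rightarrow> p x y A B)"
      by (elim exE conjE)
    show "cdru_rep Xlim p" by (rule two_to_one[OF Xlim_sub p_rule R])
  qed
  have P13: "cdru_rep Xlim p
          \<longleftrightarrow> (\<exists>q :: 'a \<Rightarrow> 'a \<Rightarrow> 'a set \<Rightarrow> 'a set \<Rightarrow> real.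
                (\<forall>(A, B)\<in>Xlim. \<forall>x\<in>A. \<forall>y\<in>B.
                   (\<Sum>A'\<in>{A'. A \<subseteq> A'}. \<Sum>B'\<in>{B'. B \<subseteq> B'}. q x y A' B') = p x y A B) \<and>
                (\<forall>A B x. A \<noteq> {} \<and> B \<noteq> {} \<and> B \<noteq> UNIV \<and> x \<in> A \<longrightarrow>
                   (\<Sum>y\<in>B. q x y A B) = (\<Sum>z\<in>UNIV - B. q x z A (insert z B))) \<and>
                (\<forall>A B x y. A \<noteq> {} \<and> B \<noteq> {} \<and> x \<in> A \<and> y \<in> B \<longrightarrow> q x y A B \<ge> 0) \<and>
                (\<forall>A. A \<noteq> {} \<and> A \<noteq> UNIV \<longrightarrow>
                   (\<Sum>x\<in>A. \<Sum>y\<in>UNIV. q x y A UNIV) =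
                   (\<Sum>z\<in>UNIV - A. \<Sum>y\<in>UNIV. q z y (insert z A) UNIV)) \<and>
                (\<Sum>x\<in>UNIV. \<Sum>y\<in>UNIV. q x y UNIV UNIV) = 1)" (is "_ \<longleftrightarrow> (\<exists>q. ?Q q)")
  proof
    assume "cdru_rep Xlim p"
    then show "\<exists>q. ?Q q" by (rule one_to_three)
  next
    assume "\<exists>q. ?Q q"
    then obtain q where h: "?Q q" by (elim exE)
    show "cdru_rep Xlim p"
      by (rule three_to_one[OF h[THEN conjunct1] h[THEN conjunct2, THEN conjunct1]
            h[THEN conjunct2, THEN conjunct2, THEN conjunct1]
            h[THEN conjunct2, THEN conjunct2, THEN conjunct2, THEN conjunct1]
            h[THEN conjunct2, THEN conjunct2, THEN conjunct2, THEN conjunct2]])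
  qed
  show ?thesis using P12 P13 by (rule conjI)
qed

end
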